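(* Let $A$ be a finitely generated torsion $\Lambda$-module, $M=A^\circ$ its $\mathbb{Z}_p$-torsion submodule. (i) If $x\in M$ with $p\le p^l=\mathrm{ess.ord}(x)$ and $g\in\Lambda$ satisfies $gx=0$, then $g\equiv 0\bmod p^l$. (ii) There is a distinguished polynomial $G(T)\in\mathbb{Z}_p[T]$ such that $G(T)A\subseteq M$ and $\mathrm{ord}(y)=\mathrm{ess.ord}(y)$ for all $y\in G(T)A$. (iii) If $x\in A\setminus D(A)$ and $p^{\delta(x)}x=c+z$ with $c\in\mathcal{L}(A)$, $z\in M$, then $c\notin p\,\mathcal{L}(A)$.
   Context: $p$ is an odd prime, $\Lambda=\mathbb{Z}_p[[T]]$. For a finitely generated torsion $\Lambda$-module $A$: $A^\circ=M(A)$ is its $\mathbb{Z}_p$-torsion submodule; $\mathcal{L}(A)=\{x\in A:\ p\text{-rank}(\Lambda x)<\infty\}$; $D(A)=\mathcal{L}(A)+M(A)$ (the module of decomposable elements). For $x\in M(A)$, $\mathrm{ord}(x)=\min\{p^k: p^kx=0\}$ and the essential order $\mathrm{ess.ord}(x)$ is the common value of $\mathrm{ord}(T^jx)$ for all sufficiently large $j$. For $x\in A\setminus D(A)$, $\delta(x)=\min\{k>0: p^kx\in D(A)\}$. *)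

theory Defs
  imports "HOL-Algebra.Module" "HOL-Computational_Algebra.Primes"
begin

text \<open>A p-adic integer is represented by its sequence of truncations
  a n = (a mod p^n) in {0..<p^n}, compatible under reduction.\<close>

definition zp :: "nat \<Rightarrow> (nat \<Rightarrow> int) \<Rightarrow> bool" where
  "zp p a \<longleftrightarrow> (\<forall>n. 0 \<le> a n \<and> a n < int p ^ n) \<and> (\<forall>n. a n = a (Suc n) mod int p ^ n)"

definition zp_of_int :: "nat \<Rightarrow> int \<Rightarrow> nat \<Rightarrow> int" where
  "zp_of_int p c = (\<lambda>n. c mod int p ^ n)"

text \<open>An element of Lambda = Z_p[[T]] is a function f with f k the k-th
  coefficient (a p-adic integer), so f k n = (coefficient of T^k) mod p^n.\<close>

type_synonym lam = "nat \<Rightarrow> nat \<Rightarrow> int"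

definition lam_add :: "nat \<Rightarrow> lam \<Rightarrow> lam \<Rightarrow> lam" where
  "lam_add p f g = (\<lambda>k n. (f k n + g k n) mod int p ^ n)"

definition lam_mult :: "nat \<Rightarrow> lam \<Rightarrow> lam \<Rightarrow> lam" where
  "lam_mult p f g = (\<lambda>k n. (\<Sum>i\<le>k. f i n * g (k - i) n) mod int p ^ n)"

definition lam_const :: "(nat \<Rightarrow> int) \<Rightarrow> lam" where
  "lam_const a = (\<lambda>k n. if k = 0 then a n else 0)"

definition Lambda :: "nat \<Rightarrow> lam ring" where
  "Lambda p = \<lparr> carrier = {f. \<forall>k. zp p (f k)},
                monoid.mult = lam_mult p,
                one = lam_const (zp_of_int p 1),
                zero = (\<lambda>k n. 0),
                add = lam_add p \<rparr>"

definition lam_int :: "nat \<Rightarrow> int \<Rightarrow> lam" where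
  "lam_int p c = lam_const (zp_of_int p c)"

definition lam_T :: "nat \<Rightarrow> lam" where
  "lam_T p = (\<lambda>k n. if k = 1 then 1 mod int p ^ n else 0)"

definition distinguished :: "nat \<Rightarrow> lam \<Rightarrow> bool" where
  "distinguished p G \<longleftrightarrow> G \<in> carrier (Lambda p) \<and>
     (\<exists>d. G d = zp_of_int p 1 \<and> (\<forall>k>d. G k = (\<lambda>n. 0)) \<and>
          (\<forall>k<d. \<exists>b. zp p b \<and> G k = (\<lambda>n. (int p * b n) mod int p ^ n)))"

definition scal_submod :: "('r, 'a, 'm) module_scheme \<Rightarrow> 'r set \<Rightarrow> 'a set \<Rightarrow> bool" where
  "scal_submod A Sc H \<longleftrightarrow> H \<subseteq> carrier A \<and> \<zero>\<^bsub>A\<^esub> \<in> H \<and>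
     (\<forall>x\<in>H. \<forall>y\<in>H. x \<oplus>\<^bsub>A\<^esub> y \<in> H) \<and> (\<forall>a\<in>Sc. \<forall>x\<in>H. a \<odot>\<^bsub>A\<^esub> x \<in> H)"

definition gen_submod :: "('r, 'a, 'm) module_scheme \<Rightarrow> 'r set \<Rightarrow> 'a set \<Rightarrow> 'a set" where
  "gen_submod A Sc S = \<Inter>{H. scal_submod A Sc H \<and> S \<subseteq> H}"

definition zp_scalars :: "nat \<Rightarrow> lam set" where
  "zp_scalars p = {lam_const a | a. zp p a}"

definition fin_gen_Lambda :: "nat \<Rightarrow> (lam, 'a, 'm) module_scheme \<Rightarrow> bool" where
  "fin_gen_Lambda p A \<longleftrightarrow> (\<exists>S. finite S \<and> S \<subseteq> carrier A \<and>
       carrier A = gen_submod A (carrier (Lambda p)) S)"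

definition torsion_Lambda :: "nat \<Rightarrow> (lam, 'a, 'm) module_scheme \<Rightarrow> bool" where
  "torsion_Lambda p A \<longleftrightarrow> (\<forall>x\<in>carrier A. \<exists>g\<in>carrier (Lambda p).
       g \<noteq> \<zero>\<^bsub>Lambda p\<^esub> \<and> g \<odot>\<^bsub>A\<^esub> x = \<zero>\<^bsub>A\<^esub>)"

definition cyc :: "nat \<Rightarrow> (lam, 'a, 'm) module_scheme \<Rightarrow> 'a \<Rightarrow> 'a set" where
  "cyc p A x = {g \<odot>\<^bsub>A\<^esub> x | g. g \<in> carrier (Lambda p)}"

definition finite_p_rank :: "nat \<Rightarrow> (lam, 'a, 'm) module_scheme \<Rightarrow> 'a set \<Rightarrow> bool" where
  "finite_p_rank p A X \<longleftrightarrow> (\<exists>S. finite S \<and> S \<subseteq> X \<and> X = gen_submod A (zp_scalars p) S)"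

definition Mtors :: "nat \<Rightarrow> (lam, 'a, 'm) module_scheme \<Rightarrow> 'a set" where
  "Mtors p A = {x \<in> carrier A. \<exists>k. lam_int p (int p ^ k) \<odot>\<^bsub>A\<^esub> x = \<zero>\<^bsub>A\<^esub>}"

definition Lpart :: "nat \<Rightarrow> (lam, 'a, 'm) module_scheme \<Rightarrow> 'a set" where
  "Lpart p A = {x \<in> carrier A. finite_p_rank p A (cyc p A x)}"

definition Dpart :: "nat \<Rightarrow> (lam, 'a, 'm) module_scheme \<Rightarrow> 'a set" where
  "Dpart p A = {c \<oplus>\<^bsub>A\<^esub> z | c z. c \<in> Lpart p A \<and> z \<in> Mtors p A}"

definition ord_p :: "nat \<Rightarrow> (lam, 'a, 'm) module_scheme \<Rightarrow> 'a \<Rightarrow> nat" where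
  "ord_p p A x = p ^ (LEAST k. lam_int p (int p ^ k) \<odot>\<^bsub>A\<^esub> x = \<zero>\<^bsub>A\<^esub>)"

definition ess_ord :: "nat \<Rightarrow> (lam, 'a, 'm) module_scheme \<Rightarrow> 'a \<Rightarrow> nat" where
  "ess_ord p A x = (THE e. \<exists>J. \<forall>j::nat. j \<ge> J \<longrightarrow>
      ord_p p A ((lam_T p [^]\<^bsub>Lambda p\<^esub> j) \<odot>\<^bsub>A\<^esub> x) = e)"

definition delta :: "nat \<Rightarrow> (lam, 'a, 'm) module_scheme \<Rightarrow> 'a \<Rightarrow> nat" where
  "delta p A x = (LEAST k. 0 < k \<and> lam_int p (int p ^ k) \<odot>\<^bsub>A\<^esub> x \<in> Dpart p A)"

end

theory Submission
  imports Defs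
begin


lemma zp_bounds: "zp p a \<Longrightarrow> 0 \<le> a n \<and> a n < int p ^ n" unfolding zp_def by blast
lemma zp_step: "zp p a \<Longrightarrow> a n = a (Suc n) mod int p ^ n" unfolding zp_def by blast

lemma zp_mod_le: "zp p a \<Longrightarrow> n \<le> m \<Longrightarrow> a n = a m mod int p ^ n"
proof (induction m)
  case 0 then show ?case using zp_bounds[OF 0(1), of 0] by simp
next
  case (Suc m)
  show ?case
  proof (cases "n = Suc m")
    case True
    then show ?thesis using zp_bounds[OF Suc.prems(1), of n] by simp
  next
    case False
    then have "n \<le> m" using Suc by auto
    then have "a n = a m mod int p ^ n" using Suc by auto
    also have "a m = a (Suc m) mod int p ^ m" using zp_step[OF Suc.prems(1)] by blast
    also have "\<dots> mod int p ^ n = a (Suc m) mod int p ^ n"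
      using \<open>n \<le> m\<close> by (metis mod_mod_cancel le_imp_power_dvd of_nat_power)
    finally show ?thesis .
  qed
qed

locale LP =
  fixes p :: nat
  assumes prime_p: "prime p" and cr: "cring (Lambda p)"
begin

abbreviation "L \<equiv> Lambda p"

lemma p_gt1: "p > 1" using prime_p prime_gt_1_nat by blast
lemma pn_pos[simp]: "(0::int) < int p ^ n" using p_gt1 by simp

lemma carrier_L: "f \<in> carrier L \<longleftrightarrow> (\<forall>k. zp p (f k))" by (simp add: Lambda_def)
lemma mult_L: "f \<otimes>\<^bsub>L\<^esub> g = lam_mult p f g" by (simp add: Lambda_def)
lemma add_L: "f \<oplus>\<^bsub>L\<^esub> g = lam_add p f g" by (simp add: Lambda_def)
lemma one_L: "\<one>\<^bsub>L\<^esub> = lam_const (zp_of_int p 1)" by (simp add: Lambda_def)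
lemma zero_L: "\<zero>\<^bsub>L\<^esub> = (\<lambda>k n. 0)" by (simp add: Lambda_def)

lemma carrier_bounds: "f \<in> carrier L \<Longrightarrow> 0 \<le> f k n \<and> f k n < int p ^ n"
  using zp_bounds carrier_L by blast
lemma carrier_mod[simp]: "f \<in> carrier L \<Longrightarrow> f k n mod int p ^ n = f k n"
  using carrier_bounds by (simp add: mod_pos_pos_trivial)
lemma carrier_le: "f \<in> carrier L \<Longrightarrow> n \<le> m \<Longrightarrow> f k n = f k m mod int p ^ n"
  using zp_mod_le carrier_L by blast

lemma carrierI: assumes "\<And>k n. f k n = g k n mod int p ^ n" "\<And>k n. g k n mod int p ^ n = g k (Suc n) mod int p ^ n"
  shows "f \<in> carrier L"
  unfolding carrier_L zp_def
proof (intro allI conjI)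
  fix k n show "0 \<le> f k n" "f k n < int p ^ n" using assms(1)[of k n] pn_pos[of n] by auto
  have "f k (Suc n) mod int p ^ n = g k (Suc n) mod int p ^ n"
    unfolding assms(1)[of k "Suc n"] by (metis mod_mod_cancel le_imp_power_dvd of_nat_power le_SucI order_refl)
  then show "f k n = f k (Suc n) mod int p ^ n" using assms(1)[of k n] assms(2)[of k n] by simp
qed

end

sublocale LP \<subseteq> R: cring "Lambda p" by (rule cr)

context LP begin

definition mono :: "nat \<Rightarrow> lam" where "mono r = (\<lambda>k n. if k = r then 1 mod int p ^ n else 0)"
definition lo :: "nat \<Rightarrow> lam \<Rightarrow> lam" where "lo r f = (\<lambda>k n. if k < r then f k n else 0)"
definition sh :: "nat \<Rightarrow> lam \<Rightarrow> lam" where "sh r f = (\<lambda>k n. f (k + r) n)"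
definition pdvd :: "nat \<Rightarrow> lam \<Rightarrow> bool" where "pdvd m f \<longleftrightarrow> (\<forall>i. f i m = 0)"
definition eqv :: "nat \<Rightarrow> lam \<Rightarrow> lam \<Rightarrow> bool" where "eqv n f g \<longleftrightarrow> (\<forall>i. f i n = g i n)"
definition deq :: "nat \<Rightarrow> lam \<Rightarrow> lam \<Rightarrow> bool" where "deq k f g \<longleftrightarrow> (\<forall>i<k. \<forall>n. f i n = g i n)"

lemma one_eq: "\<one>\<^bsub>L\<^esub> = mono 0" by (simp add: one_L lam_const_def zp_of_int_def mono_def)
lemma lam_int_eq: "lam_int p c = (\<lambda>k n. if k = 0 then c mod int p ^ n else 0)"
  by (simp add: lam_int_def lam_const_def zp_of_int_def)

lemma mod_Suc_mod[simp]: "a mod int p ^ Suc n mod int p ^ n = a mod int p ^ n"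
  by (metis mod_mod_cancel le_imp_power_dvd of_nat_power le_SucI order_refl)

lemma carrier_Suc: "f \<in> carrier L \<Longrightarrow> f k (Suc n) mod int p ^ n = f k n"
  using carrier_le[of f n "Suc n" k] by simp

lemma carrierI': assumes "\<And>k n. f k n = g k mod int p ^ n" shows "f \<in> carrier L"
  by (rule carrierI[where g="\<lambda>k n. g k"]) (use assms in auto)

lemma mono_closed[simp]: "mono r \<in> carrier L"
  by (rule carrierI'[where g="\<lambda>k. if k = r then 1 else 0"]) (simp add: mono_def)

lemma lam_int_closed[simp]: "lam_int p c \<in> carrier L"
  by (rule carrierI'[where g="\<lambda>k. if k = 0 then c else 0"]) (simp add: lam_int_eq)

lemma lo_closed[simp]: assumes "f \<in> carrier L" shows "lo r f \<in> carrier L"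
proof (rule carrierI[where g="lo r f"])
  fix k n show "lo r f k n = lo r f k n mod int p ^ n" using assms by (simp add: lo_def)
  show "lo r f k n mod int p ^ n = lo r f k (Suc n) mod int p ^ n"
    using assms carrier_Suc[OF assms] by (simp add: lo_def)
qed

lemma sh_closed[simp]: assumes "f \<in> carrier L" shows "sh r f \<in> carrier L"
  using assms unfolding carrier_L sh_def by simp

lemma zero_lev[simp]: "f \<in> carrier L \<Longrightarrow> f k 0 = 0"
  using carrier_bounds[of f k 0] by simp

lemma neg_eq: assumes "f \<in> carrier L" shows "\<ominus>\<^bsub>L\<^esub> f = (\<lambda>k n. (- f k n) mod int p ^ n)"
proof -
  let ?g = "(\<lambda>k n. (- f k n) mod int p ^ n)"
  have gc: "?g \<in> carrier L"
  proof (rule carrierI[where g="\<lambda>k n. - f k n"])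
    fix k n show "(- f k n) mod int p ^ n = (- f k n) mod int p ^ n" by simp
    show "(- f k n) mod int p ^ n = (- f k (Suc n)) mod int p ^ n"
      using carrier_Suc[OF assms, of k n] by (metis mod_minus_eq)
  qed
  have "?g \<oplus>\<^bsub>L\<^esub> f = \<zero>\<^bsub>L\<^esub>"
    unfolding add_L zero_L lam_add_def
  proof (intro ext)
    fix k n show "((- f k n) mod int p ^ n + f k n) mod int p ^ n = 0"
      by (metis add.left_inverse mod_0 mod_add_left_eq)
  qed
  then show ?thesis using R.minus_equality[OF _ assms gc] by simp
qed

lemma mult_mono: assumes "h \<in> carrier L"
  shows "mono a \<otimes>\<^bsub>L\<^esub> h = (\<lambda>k n. if a \<le> k then h (k - a) n else 0)"
proof (intro ext)
  fix k n
  have "(\<Sum>i\<le>k. mono a i n * h (k - i) n) = (\<Sum>i\<le>k. if a = i then (1 mod int p ^ n) * h (k - a) n else 0)"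
    by (rule sum.cong) (auto simp: mono_def)
  also have "\<dots> = (if a \<le> k then (1 mod int p ^ n) * h (k - a) n else 0)"
    by (simp add: sum.delta)
  finally show "(mono a \<otimes>\<^bsub>L\<^esub> h) k n = (if a \<le> k then h (k - a) n else 0)"
    unfolding mult_L lam_mult_def using assms
    by (simp add: mod_mult_left_eq)
qed

lemma mult_int: assumes "h \<in> carrier L"
  shows "lam_int p c \<otimes>\<^bsub>L\<^esub> h = (\<lambda>k n. (c * h k n) mod int p ^ n)"
proof (intro ext)
  fix k n
  have "(\<Sum>i\<le>k. lam_int p c i n * h (k - i) n) = (\<Sum>i\<le>k. if 0 = i then (c mod int p ^ n) * h k n else 0)"
    by (rule sum.cong) (auto simp: lam_int_eq)
  also have "\<dots> = (c mod int p ^ n) * h k n"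
    by (simp add: sum.delta)
  finally show "(lam_int p c \<otimes>\<^bsub>L\<^esub> h) k n = (c * h k n) mod int p ^ n"
    unfolding mult_L lam_mult_def using assms
    by (metis mod_mult_left_eq)
qed

lemma lam_int_mult: "lam_int p a \<otimes>\<^bsub>L\<^esub> lam_int p b = lam_int p (a * b)"
  by (subst mult_int) (auto simp: lam_int_eq mod_mult_right_eq intro!: ext lam_int_closed[unfolded lam_int_eq])

lemma lam_int_one: "lam_int p 1 = \<one>\<^bsub>L\<^esub>"
  by (simp add: one_eq lam_int_eq mono_def)

lemma T_pow: "lam_T p [^]\<^bsub>L\<^esub> r = mono r"
proof (induction r)
  case 0 then show ?case by (simp add: one_eq)
next
  case (Suc r)
  have "lam_T p = mono 1" by (simp add: lam_T_def mono_def)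
  then have "lam_T p [^]\<^bsub>L\<^esub> Suc r = mono 1 \<otimes>\<^bsub>L\<^esub> mono r"
    using Suc R.m_comm by simp
  also have "\<dots> = mono (Suc r)" by (subst mult_mono) (auto simp: mono_def intro!: ext mono_closed[unfolded mono_def])
  finally show ?case .
qed

end

context LP begin

lemma eqv_mult: "eqv n f f' \<Longrightarrow> eqv n g g' \<Longrightarrow> eqv n (f \<otimes>\<^bsub>L\<^esub> g) (f' \<otimes>\<^bsub>L\<^esub> g')"
  unfolding eqv_def mult_L lam_mult_def by simp
lemma eqv_add: "eqv n f f' \<Longrightarrow> eqv n g g' \<Longrightarrow> eqv n (f \<oplus>\<^bsub>L\<^esub> g) (f' \<oplus>\<^bsub>L\<^esub> g')"
  unfolding eqv_def add_L lam_add_def by simp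
lemma eqv_neg: "f \<in> carrier L \<Longrightarrow> f' \<in> carrier L \<Longrightarrow> eqv n f f' \<Longrightarrow> eqv n (\<ominus>\<^bsub>L\<^esub> f) (\<ominus>\<^bsub>L\<^esub> f')"
  unfolding eqv_def by (simp add: neg_eq)
lemma eqv_sh: "eqv n f f' \<Longrightarrow> eqv n (sh r f) (sh r f')"
  unfolding eqv_def sh_def by simp
lemma eqv_refl[simp]: "eqv n f f" unfolding eqv_def by simp
lemma eqv_trans: "eqv n f g \<Longrightarrow> eqv n g h \<Longrightarrow> eqv n f h" unfolding eqv_def by simp
lemma eqv_sym: "eqv n f g \<Longrightarrow> eqv n g f" unfolding eqv_def by simp
lemma eqv_0: "f \<in> carrier L \<Longrightarrow> g \<in> carrier L \<Longrightarrow> eqv 0 f g" unfolding eqv_def by simp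
lemma eqv_down: "f \<in> carrier L \<Longrightarrow> g \<in> carrier L \<Longrightarrow> eqv n f g \<Longrightarrow> m \<le> n \<Longrightarrow> eqv m f g"
  unfolding eqv_def by (metis carrier_le)
lemma eqv_ext: "(\<And>n. eqv n f g) \<Longrightarrow> f = g" unfolding eqv_def by (intro ext) auto

lemma pdvd_int_mult: "h \<in> carrier L \<Longrightarrow> pdvd k (lam_int p (int p ^ k) \<otimes>\<^bsub>L\<^esub> h)"
  unfolding pdvd_def by (simp add: mult_int)

lemma pdvd_dvd: assumes "f \<in> carrier L" "pdvd k f" "k \<le> m" shows "int p ^ k dvd f i m"
proof -
  have "f i k = f i m mod int p ^ k" using carrier_le assms by blast
  then show ?thesis using assms(2) unfolding pdvd_def by (simp add: mod_0_imp_dvd)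
qed

lemma pdvd_mono: assumes "f \<in> carrier L" "pdvd m f" "n \<le> m" shows "pdvd n f"
  unfolding pdvd_def using carrier_le[OF assms(1) assms(3)] assms(2) unfolding pdvd_def by simp

lemma pdvd_factor: assumes fc: "f \<in> carrier L" and pd: "pdvd k f"
  shows "\<exists>h\<in>carrier L. f = lam_int p (int p ^ k) \<otimes>\<^bsub>L\<^esub> h"
proof -
  define h where "h = (\<lambda>i n. f i (n + k) div int p ^ k)"
  have dv: "int p ^ k dvd f i m" if "k \<le> m" for i m using pdvd_dvd[OF fc pd that] .
  have hc: "h \<in> carrier L"
    unfolding carrier_L zp_def
  proof (intro allI conjI)
    fix i n
    have b: "0 \<le> f i (n+k)" "f i (n+k) < int p ^ (n+k)" using carrier_bounds[OF fc] by auto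
    show "0 \<le> h i n" unfolding h_def using b pn_pos[of k] pos_imp_zdiv_nonneg_iff by blast
    obtain q where q: "f i (n+k) = int p ^ k * q" using dv[of "n+k" i] by auto
    have "int p ^ k * q < int p ^ k * int p ^ n" using b q by (simp add: power_add mult.commute)
    then have "q < int p ^ n" using pn_pos[of k] mult_less_cancel_left_pos by blast
    then show "h i n < int p ^ n" unfolding h_def using q p_gt1 by simp
    obtain q' where q': "f i (Suc n+k) = int p ^ k * q'" using dv[of "Suc n+k" i] by auto
    have "f i (n+k) = f i (Suc n + k) mod int p ^ (n+k)" using carrier_le[OF fc, of "n+k" "Suc n + k"] by simp
    also have "\<dots> = int p ^ k * (q' mod int p ^ n)" unfolding q' by (simp add: power_add mult.commute mod_mult_mult1)
    finally have "q = q' mod int p ^ n" using q p_gt1 by simp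
    then show "h i n = h i (Suc n) mod int p ^ n" unfolding h_def using q q' by simp
  qed
  have "f = lam_int p (int p ^ k) \<otimes>\<^bsub>L\<^esub> h"
  proof (intro ext)
    fix i n
    obtain q where q: "f i (n+k) = int p ^ k * q" using dv[of "n+k" i] by auto
    have "f i n = f i (n+k) mod int p ^ n" using carrier_le[OF fc] by simp
    then show "f i n = (lam_int p (int p ^ k) \<otimes>\<^bsub>L\<^esub> h) i n"
      unfolding mult_int[OF hc] using q p_gt1 by (simp add: h_def)
  qed
  then show ?thesis using hc by blast
qed

end

context LP begin

lemma contraction: assumes bc: "b \<in> carrier L" and fc: "f \<in> carrier L" and gc: "g \<in> carrier L"
  and pb: "pdvd 1 b" and e: "eqv n f g"
  shows "eqv (Suc n) (b \<otimes>\<^bsub>L\<^esub> f) (b \<otimes>\<^bsub>L\<^esub> g)"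
  unfolding eqv_def mult_L lam_mult_def
proof
  fix i
  let ?N = "Suc n"
  have "int p ^ ?N dvd (\<Sum>j\<le>i. b j ?N * f (i - j) ?N) - (\<Sum>j\<le>i. b j ?N * g (i - j) ?N)"
    unfolding sum_subtractf[symmetric]
  proof (rule dvd_sum)
    fix j
    have d1: "int p dvd b j ?N" using pdvd_dvd[OF bc pb, of ?N j] by simp
    have "f (i-j) ?N mod int p ^ n = g (i-j) ?N mod int p ^ n"
      using carrier_Suc[OF fc] carrier_Suc[OF gc] e unfolding eqv_def by metis
    then have d2: "int p ^ n dvd f (i-j) ?N - g (i-j) ?N" by (simp add: mod_eq_dvd_iff)
    have "int p * int p ^ n dvd b j ?N * (f (i-j) ?N - g (i-j) ?N)" using d1 d2 by (rule mult_dvd_mono)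
    then show "int p ^ ?N dvd b j ?N * f (i - j) ?N - b j ?N * g (i - j) ?N"
      by (simp add: right_diff_distrib)
  qed
  then show "(\<Sum>j\<le>i. b j ?N * f (i - j) ?N) mod int p ^ ?N = (\<Sum>j\<le>i. b j ?N * g (i - j) ?N) mod int p ^ ?N"
    by (simp add: mod_eq_dvd_iff)
qed

lemma decomp_eq: assumes "u \<in> carrier L"
  shows "u = lo r u \<oplus>\<^bsub>L\<^esub> mono r \<otimes>\<^bsub>L\<^esub> sh r u"
  unfolding add_L lam_add_def mult_mono[OF sh_closed[OF assms]]
  by (intro ext) (auto simp: lo_def sh_def assms)

lemma decomp: assumes uc: "u \<in> carrier L" and z: "\<And>i. i < r \<Longrightarrow> u i 1 = 0"
  shows "\<exists>a\<in>carrier L. u = lam_int p (int p) \<otimes>\<^bsub>L\<^esub> a \<oplus>\<^bsub>L\<^esub> mono r \<otimes>\<^bsub>L\<^esub> sh r u"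
proof -
  have "pdvd 1 (lo r u)" unfolding pdvd_def lo_def using z by auto
  then obtain a where "a \<in> carrier L" "lo r u = lam_int p (int p ^ 1) \<otimes>\<^bsub>L\<^esub> a"
    using pdvd_factor[OF lo_closed[OF uc]] by blast
  then show ?thesis using decomp_eq[OF uc, of r] by auto
qed

lemma inv_mod_ex: fixes a m :: int assumes "coprime a m" "m > 0"
  shows "\<exists>x. 0 \<le> x \<and> x < m \<and> (a * x) mod m = 1 mod m"
proof -
  obtain u v where uv: "u * a + v * m = gcd a m" using bezout_int by blast
  then have uv1: "u * a + v * m = 1" using assms by simp
  have "(a * (u mod m)) mod m = (a * u) mod m" by (simp add: mod_mult_right_eq)
  also have "\<dots> = (1 - v * m) mod m" using uv1 by (metis add_diff_cancel_right' mult.commute)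
  also have "\<dots> = 1 mod m" by (simp add: mod_eq_dvd_iff)
  finally show ?thesis using assms(2) by (intro exI[of _ "u mod m"]) auto
qed

lemma inv_mod_uniq: fixes a m x y :: int assumes "coprime a m" "0 \<le> x" "x < m" "0 \<le> y" "y < m"
  "(a * x) mod m = (a * y) mod m" shows "x = y"
proof -
  have "m dvd a * (x - y)" using assms(6) by (simp add: mod_eq_dvd_iff right_diff_distrib)
  then have "m dvd x - y" using assms(1) by (metis coprime_commute coprime_dvd_mult_right_iff)
  show ?thesis
  proof (rule ccontr)
    assume "x \<noteq> y"
    then have "\<bar>m\<bar> \<le> \<bar>x - y\<bar>" using dvd_imp_le_int \<open>m dvd x - y\<close> by simp
    then show False using assms by linarith
  qed
qed


lemma deq_multl: "deq k f g \<Longrightarrow> deq k (h \<otimes>\<^bsub>L\<^esub> f) (h \<otimes>\<^bsub>L\<^esub> g)"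
  unfolding deq_def mult_L lam_mult_def by auto
lemma deq_add: "deq k f f' \<Longrightarrow> deq k g g' \<Longrightarrow> deq k (f \<oplus>\<^bsub>L\<^esub> g) (f' \<oplus>\<^bsub>L\<^esub> g')"
  unfolding deq_def add_L lam_add_def by simp
lemma deq_neg: "f \<in> carrier L \<Longrightarrow> f' \<in> carrier L \<Longrightarrow> deq k f f' \<Longrightarrow> deq k (\<ominus>\<^bsub>L\<^esub> f) (\<ominus>\<^bsub>L\<^esub> f')"
  unfolding deq_def by (simp add: neg_eq)
lemma deq_minus: "f \<in> carrier L \<Longrightarrow> f' \<in> carrier L \<Longrightarrow> g \<in> carrier L \<Longrightarrow> g' \<in> carrier L \<Longrightarrow>
   deq k f f' \<Longrightarrow> deq k g g' \<Longrightarrow> deq k (f \<ominus>\<^bsub>L\<^esub> g) (f' \<ominus>\<^bsub>L\<^esub> g')"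
  by (simp add: R.minus_eq deq_add deq_neg)
lemma deq_T: "f \<in> carrier L \<Longrightarrow> g \<in> carrier L \<Longrightarrow> deq k f g \<Longrightarrow> deq (Suc k) (mono 1 \<otimes>\<^bsub>L\<^esub> f) (mono 1 \<otimes>\<^bsub>L\<^esub> g)"
  unfolding deq_def by (simp add: mult_mono)
lemma deq_refl[simp]: "deq k f f" unfolding deq_def by simp
lemma deq_0[simp]: "deq 0 f g" unfolding deq_def by simp
lemma deq_trans: "deq k f g \<Longrightarrow> deq k g h \<Longrightarrow> deq k f h" unfolding deq_def by simp
lemma deq_sym: "deq k f g \<Longrightarrow> deq k g f" unfolding deq_def by simp
lemma deq_le: "deq k f g \<Longrightarrow> m \<le> k \<Longrightarrow> deq m f g" unfolding deq_def by simp

lemma const_inv: assumes vc: "v \<in> carrier L" and v0: "v 0 1 \<noteq> 0"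
  shows "\<exists>c\<in>carrier L. lo 1 v \<otimes>\<^bsub>L\<^esub> c = \<one>\<^bsub>L\<^esub>"
proof -
  have pr: "prime (int p)" using prime_p by simp
  have cop: "coprime (v 0 n) (int p ^ n)" for n
  proof (cases n)
    case 0 then show ?thesis by simp
  next
    case (Suc m)
    have "\<not> int p dvd v 0 n"
    proof
      assume "int p dvd v 0 n"
      then have "v 0 n mod int p = 0" by simp
      moreover have "v 0 1 = v 0 n mod int p ^ 1" using carrier_le[OF vc, of 1 n 0] Suc by simp
      ultimately show False using v0 by simp
    qed
    then have "coprime (int p) (v 0 n)" using prime_imp_coprime[OF pr] by blast
    then show ?thesis using Suc by (simp add: coprime_commute)
  qed
  define e where "e n = (SOME x. 0 \<le> x \<and> x < int p ^ n \<and> (v 0 n * x) mod int p ^ n = 1 mod int p ^ n)" for n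
  have eP: "0 \<le> e n \<and> e n < int p ^ n \<and> (v 0 n * e n) mod int p ^ n = 1 mod int p ^ n" for n
    unfolding e_def by (rule someI_ex) (rule inv_mod_ex[OF cop pn_pos])
  have ecomp: "e n = e (Suc n) mod int p ^ n" for n
  proof -
    have "(v 0 n * (e (Suc n) mod int p ^ n)) mod int p ^ n
        = ((v 0 (Suc n) mod int p ^ n) * (e (Suc n) mod int p ^ n)) mod int p ^ n"
      using carrier_Suc[OF vc, of 0 n] by simp
    also have "\<dots> = (v 0 (Suc n) * e (Suc n)) mod int p ^ Suc n mod int p ^ n"
      by (simp only: mod_Suc_mod mod_mult_eq)
    also have "\<dots> = 1 mod int p ^ n" using eP[of "Suc n"] by (simp only: mod_Suc_mod)
    finally have "(v 0 n * (e (Suc n) mod int p ^ n)) mod int p ^ n = (v 0 n * e n) mod int p ^ n"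
      using eP[of n] by simp
    then show ?thesis using inv_mod_uniq[OF cop[of n]] eP[of n] pn_pos[of n]
      by (metis pos_mod_bound pos_mod_sign)
  qed
  define c :: lam where "c = (\<lambda>k n. if k = 0 then e n else 0)"
  have cc: "c \<in> carrier L"
  proof (rule carrierI[where g=c])
    fix k n show "c k n = c k n mod int p ^ n" using eP[of n] by (simp add: c_def)
    show "c k n mod int p ^ n = c k (Suc n) mod int p ^ n" using eP[of n] ecomp[of n] by (simp add: c_def)
  qed
  have "lo 1 v \<otimes>\<^bsub>L\<^esub> c = \<one>\<^bsub>L\<^esub>"
  proof (intro ext)
    fix k n
    show "(lo 1 v \<otimes>\<^bsub>L\<^esub> c) k n = \<one>\<^bsub>L\<^esub> k n"
    proof (cases "k = 0")
      case True then show ?thesis using eP[of n]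
        by (simp add: mult_L lam_mult_def one_eq mono_def lo_def c_def)
    next
      case False
      have "(\<Sum>j\<le>k. lo 1 v j n * c (k - j) n) = 0"
        by (rule sum.neutral) (use False in \<open>auto simp: lo_def c_def\<close>)
      then show ?thesis using False by (simp add: mult_L lam_mult_def one_eq mono_def)
    qed
  qed
  then show ?thesis using cc by blast
qed

end

context LP begin

lemma unit_inv: assumes vc: "v \<in> carrier L" and v0: "v 0 1 \<noteq> 0"
  shows "\<exists>w\<in>carrier L. v \<otimes>\<^bsub>L\<^esub> w = \<one>\<^bsub>L\<^esub>"
proof -
  obtain c where cc: "c \<in> carrier L" and ac: "lo 1 v \<otimes>\<^bsub>L\<^esub> c = \<one>\<^bsub>L\<^esub>"
    using const_inv[OF vc v0] by blast
  define s where "s = sh 1 v"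
  have sc: "s \<in> carrier L" using vc by (simp add: s_def)
  define t where "t = mono 1 \<otimes>\<^bsub>L\<^esub> s"
  have tc: "t \<in> carrier L" using sc by (simp add: t_def)
  define Psi where "Psi w = c \<otimes>\<^bsub>L\<^esub> (\<one>\<^bsub>L\<^esub> \<ominus>\<^bsub>L\<^esub> t \<otimes>\<^bsub>L\<^esub> w)" for w
  have Pc: "w \<in> carrier L \<Longrightarrow> Psi w \<in> carrier L" for w using cc tc by (simp add: Psi_def)
  have Pd: "deq (Suc k) (Psi f) (Psi g)" if "f \<in> carrier L" "g \<in> carrier L" "deq k f g" for f g k
  proof -
    have "deq k (s \<otimes>\<^bsub>L\<^esub> f) (s \<otimes>\<^bsub>L\<^esub> g)" by (rule deq_multl[OF that(3)])
    then have "deq (Suc k) (mono 1 \<otimes>\<^bsub>L\<^esub> (s \<otimes>\<^bsub>L\<^esub> f)) (mono 1 \<otimes>\<^bsub>L\<^esub> (s \<otimes>\<^bsub>L\<^esub> g))"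
      using that sc by (intro deq_T) auto
    then have "deq (Suc k) (t \<otimes>\<^bsub>L\<^esub> f) (t \<otimes>\<^bsub>L\<^esub> g)"
      using that sc by (simp add: t_def R.m_assoc)
    then have "deq (Suc k) (\<one>\<^bsub>L\<^esub> \<ominus>\<^bsub>L\<^esub> t \<otimes>\<^bsub>L\<^esub> f) (\<one>\<^bsub>L\<^esub> \<ominus>\<^bsub>L\<^esub> t \<otimes>\<^bsub>L\<^esub> g)"
      using that tc by (intro deq_minus) auto
    then show ?thesis unfolding Psi_def by (rule deq_multl)
  qed
  define ws where "ws = rec_nat \<zero>\<^bsub>L\<^esub> (\<lambda>_ w. Psi w)"
  have ws0: "ws 0 = \<zero>\<^bsub>L\<^esub>" and wsS: "ws (Suc k) = Psi (ws k)" for k by (simp_all add: ws_def)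
  have wsc: "ws k \<in> carrier L" for k by (induction k) (simp_all add: ws0 wsS Pc)
  have step: "deq k (ws (Suc k)) (ws k)" for k
  proof (induction k)
    case 0 then show ?case by simp
  next
    case (Suc k) then show ?case unfolding wsS[of "Suc k"] wsS[of k] using wsc by (intro Pd) (simp_all add: wsS Pc)
  qed
  have chain: "deq k (ws m) (ws k)" if "k \<le> m" for k m
    using that
  proof (induction m)
    case 0 then show ?case by simp
  next
    case (Suc m)
    show ?case
    proof (cases "k = Suc m")
      case True then show ?thesis by simp
    next
      case False
      then have "deq k (ws m) (ws k)" using Suc by simp
      moreover have "deq k (ws (Suc m)) (ws m)" using step[of m] False Suc.prems deq_le by simp
      ultimately show ?thesis using deq_trans by blast
    qed
  qed
  define W :: lam where "W = (\<lambda>i n. ws (Suc i) i n)"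
  have Wc: "W \<in> carrier L" using wsc unfolding carrier_L W_def by simp
  have Wd: "deq k W (ws k)" for k
    unfolding deq_def W_def
  proof (intro allI impI)
    fix i n assume "i < k"
    then show "ws (Suc i) i n = ws k i n" using chain[of "Suc i" k] unfolding deq_def by simp
  qed
  have fixW: "Psi W = W"
  proof (intro ext)
    fix i n
    have "deq (Suc i) (Psi W) (Psi (ws i))" using Pd[OF Wc wsc Wd] .
    then have "Psi W i n = ws (Suc i) i n" unfolding deq_def wsS by simp
    then show "Psi W i n = W i n" by (simp add: W_def)
  qed
  have "v = lo 1 v \<oplus>\<^bsub>L\<^esub> t" using decomp_eq[OF vc, of 1] by (simp add: t_def s_def)
  then have "v \<otimes>\<^bsub>L\<^esub> W = lo 1 v \<otimes>\<^bsub>L\<^esub> W \<oplus>\<^bsub>L\<^esub> t \<otimes>\<^bsub>L\<^esub> W"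
    using vc tc Wc by (metis R.l_distr lo_closed)
  also have "lo 1 v \<otimes>\<^bsub>L\<^esub> W = \<one>\<^bsub>L\<^esub> \<ominus>\<^bsub>L\<^esub> t \<otimes>\<^bsub>L\<^esub> W"
  proof -
    have "lo 1 v \<otimes>\<^bsub>L\<^esub> W = lo 1 v \<otimes>\<^bsub>L\<^esub> Psi W" using fixW by simp
    also have "\<dots> = (lo 1 v \<otimes>\<^bsub>L\<^esub> c) \<otimes>\<^bsub>L\<^esub> (\<one>\<^bsub>L\<^esub> \<ominus>\<^bsub>L\<^esub> t \<otimes>\<^bsub>L\<^esub> W)"
      unfolding Psi_def using vc cc tc Wc by (simp add: R.m_assoc)
    finally show ?thesis using ac tc Wc by simp
  qed
  also have "(\<one>\<^bsub>L\<^esub> \<ominus>\<^bsub>L\<^esub> t \<otimes>\<^bsub>L\<^esub> W) \<oplus>\<^bsub>L\<^esub> t \<otimes>\<^bsub>L\<^esub> W = \<one>\<^bsub>L\<^esub>"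
    using tc Wc by (simp add: R.minus_eq R.a_assoc R.l_neg)
  finally show ?thesis using Wc by blast
qed

end

context LP begin

lemma lam_int_p1: "lam_int p (int p) = lam_int p (int p ^ 1)" by simp

lemma nu_decomp: assumes uc: "u \<in> carrier L" and np: "\<not> pdvd 1 u"
  shows "\<exists>r. \<exists>a\<in>carrier L. \<exists>v\<in>carrier L. \<exists>w\<in>carrier L.
     u = lam_int p (int p) \<otimes>\<^bsub>L\<^esub> a \<oplus>\<^bsub>L\<^esub> mono r \<otimes>\<^bsub>L\<^esub> v \<and> v \<otimes>\<^bsub>L\<^esub> w = \<one>\<^bsub>L\<^esub>"
proof -
  have ex: "\<exists>r. u r 1 \<noteq> 0" using np unfolding pdvd_def by blast
  define r where "r = (LEAST r. u r 1 \<noteq> 0)"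
  have ur: "u r 1 \<noteq> 0" unfolding r_def using LeastI_ex[OF ex] .
  have lt: "i < r \<Longrightarrow> u i 1 = 0" for i unfolding r_def using not_less_Least by blast
  obtain a where ac: "a \<in> carrier L" and ue: "u = lam_int p (int p) \<otimes>\<^bsub>L\<^esub> a \<oplus>\<^bsub>L\<^esub> mono r \<otimes>\<^bsub>L\<^esub> sh r u"
    using decomp[OF uc lt] by blast
  have "sh r u 0 1 \<noteq> 0" using ur by (simp add: sh_def)
  then obtain w where "w \<in> carrier L" "sh r u \<otimes>\<^bsub>L\<^esub> w = \<one>\<^bsub>L\<^esub>" using unit_inv[OF sh_closed[OF uc]] by blast
  then show ?thesis using ac ue uc by (intro exI[of _ r] bexI[of _ a] bexI[of _ "sh r u"] bexI[of _ w]) auto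
qed

lemma distinguishedI: assumes Pc: "P \<in> carrier L" and top: "\<And>n. P r n = 1 mod int p ^ n"
  and hi: "\<And>k n. k > r \<Longrightarrow> P k n = 0" and low: "\<And>k. k < r \<Longrightarrow> P k 1 = 0"
  shows "distinguished p P"
proof -
  have "pdvd 1 (lo r P)" using low unfolding pdvd_def lo_def by simp
  then obtain h where hc: "h \<in> carrier L" and he: "lo r P = lam_int p (int p ^ 1) \<otimes>\<^bsub>L\<^esub> h"
    using pdvd_factor[OF lo_closed[OF Pc]] by blast
  have "P k = (\<lambda>n. (int p * h k n) mod int p ^ n)" if "k < r" for k
  proof (intro ext)
    fix n
    have "P k n = lo r P k n" using that by (simp add: lo_def)
    then show "P k n = (int p * h k n) mod int p ^ n" using he by (simp add: mult_int[OF hc])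
  qed
  moreover have "zp p (h k)" for k using hc carrier_L by blast
  ultimately show ?thesis unfolding distinguished_def using Pc top hi
    by (intro conjI exI[of _ r]) (auto simp: zp_of_int_def)
qed

lemma distinguishedD: assumes "distinguished p P"
  shows "P \<in> carrier L \<and> (\<exists>r. (\<forall>n. P r n = 1 mod int p ^ n) \<and> (\<forall>k n. k > r \<longrightarrow> P k n = 0) \<and> (\<forall>k. k < r \<longrightarrow> P k 1 = 0))"
proof -
  obtain d where d: "P d = zp_of_int p 1" "\<forall>k>d. P k = (\<lambda>n. 0)"
      "\<forall>k<d. \<exists>b. zp p b \<and> P k = (\<lambda>n. (int p * b n) mod int p ^ n)"
    using assms unfolding distinguished_def by blast
  have "P k 1 = 0" if "k < d" for k using d(3) that by fastforce
  then show ?thesis using assms d unfolding distinguished_def zp_of_int_def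
    by (intro conjI exI[of _ d]) auto
qed


lemma weierstrass: assumes uc: "u \<in> carrier L" and np: "\<not> pdvd 1 u"
  shows "\<exists>q\<in>carrier L. distinguished p (u \<otimes>\<^bsub>L\<^esub> q)"
proof -
  obtain r a v w where ac: "a \<in> carrier L" and vc: "v \<in> carrier L" and wc: "w \<in> carrier L"
    and ue: "u = lam_int p (int p) \<otimes>\<^bsub>L\<^esub> a \<oplus>\<^bsub>L\<^esub> mono r \<otimes>\<^bsub>L\<^esub> v" and vw: "v \<otimes>\<^bsub>L\<^esub> w = \<one>\<^bsub>L\<^esub>"
    using nu_decomp[OF uc np] by blast
  define pp where "pp = lam_int p (int p)"
  have ppc: "pp \<in> carrier L" by (simp add: pp_def)
  define b where "b = pp \<otimes>\<^bsub>L\<^esub> (a \<otimes>\<^bsub>L\<^esub> w)"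
  have bc: "b \<in> carrier L" using ppc ac wc by (simp add: b_def)
  have pb: "pdvd 1 b" unfolding b_def pp_def lam_int_p1 using ac wc by (intro pdvd_int_mult) simp
  define f where "f = mono r \<oplus>\<^bsub>L\<^esub> b"
  have fc: "f \<in> carrier L" using bc by (simp add: f_def)
  have uf: "u = v \<otimes>\<^bsub>L\<^esub> f"
  proof -
    have "v \<otimes>\<^bsub>L\<^esub> f = v \<otimes>\<^bsub>L\<^esub> mono r \<oplus>\<^bsub>L\<^esub> v \<otimes>\<^bsub>L\<^esub> b"
      unfolding f_def using vc bc by (simp add: R.r_distr)
    also have "v \<otimes>\<^bsub>L\<^esub> b = pp \<otimes>\<^bsub>L\<^esub> a \<otimes>\<^bsub>L\<^esub> (v \<otimes>\<^bsub>L\<^esub> w)"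
      unfolding b_def using vc ppc ac wc by (simp add: R.m_ac)
    also have "\<dots> = pp \<otimes>\<^bsub>L\<^esub> a" using vw ppc ac by simp
    finally show ?thesis using ue vc ppc ac unfolding pp_def by (simp add: R.m_comm R.a_comm)
  qed
  define Phi where "Phi y = \<ominus>\<^bsub>L\<^esub> sh r (b \<otimes>\<^bsub>L\<^esub> (\<one>\<^bsub>L\<^esub> \<oplus>\<^bsub>L\<^esub> y))" for y
  have Phc: "y \<in> carrier L \<Longrightarrow> Phi y \<in> carrier L" for y using bc by (simp add: Phi_def)
  have Phe: "eqv (Suc n) (Phi y) (Phi y')" if "y \<in> carrier L" "y' \<in> carrier L" "eqv n y y'" for y y' n
  proof -
    have "eqv n (\<one>\<^bsub>L\<^esub> \<oplus>\<^bsub>L\<^esub> y) (\<one>\<^bsub>L\<^esub> \<oplus>\<^bsub>L\<^esub> y')" using that(3) by (intro eqv_add) simp_all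
    then have "eqv (Suc n) (b \<otimes>\<^bsub>L\<^esub> (\<one>\<^bsub>L\<^esub> \<oplus>\<^bsub>L\<^esub> y)) (b \<otimes>\<^bsub>L\<^esub> (\<one>\<^bsub>L\<^esub> \<oplus>\<^bsub>L\<^esub> y'))"
      using that bc pb by (intro contraction) auto
    then show ?thesis unfolding Phi_def using that bc by (intro eqv_neg eqv_sh) auto
  qed
  define ys where "ys = rec_nat \<zero>\<^bsub>L\<^esub> (\<lambda>_ y. Phi y)"
  have ys0: "ys 0 = \<zero>\<^bsub>L\<^esub>" and ysS: "ys (Suc k) = Phi (ys k)" for k by (simp_all add: ys_def)
  have ysc: "ys k \<in> carrier L" for k by (induction k) (simp_all add: ys0 ysS Phc)
  have step: "eqv k (ys (Suc k)) (ys k)" for k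
  proof (induction k)
    case 0 then show ?case using ysc by (intro eqv_0)
  next
    case (Suc k) then show ?case unfolding ysS[of "Suc k"] ysS[of k] using ysc by (intro Phe) (simp_all add: ysS Phc)
  qed
  define Y :: lam where "Y = (\<lambda>i n. ys n i n)"
  have Yc: "Y \<in> carrier L"
    unfolding carrier_L zp_def
  proof (intro allI conjI)
    fix i n
    show "0 \<le> Y i n" "Y i n < int p ^ n" using carrier_bounds[OF ysc] by (auto simp: Y_def)
    have "Y i (Suc n) mod int p ^ n = ys (Suc n) i n" unfolding Y_def using carrier_Suc[OF ysc] by simp
    also have "\<dots> = ys n i n" using step[of n] unfolding eqv_def by simp
    finally show "Y i n = Y i (Suc n) mod int p ^ n" by (simp add: Y_def)
  qed
  have fixY: "Phi Y = Y"
  proof (rule eqv_ext)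
    fix n show "eqv n (Phi Y) Y"
    proof (cases n)
      case 0 then show ?thesis using Phc[OF Yc] Yc by (simp add: eqv_0)
    next
      case (Suc k)
      have "eqv k Y (ys k)" unfolding eqv_def Y_def by simp
      then have "eqv (Suc k) (Phi Y) (ys (Suc k))" unfolding ysS using Phe[OF Yc ysc] by simp
      moreover have "eqv (Suc k) (ys (Suc k)) Y" unfolding eqv_def Y_def by simp
      ultimately show ?thesis using Suc eqv_trans by blast
    qed
  qed
  define cb where "cb = b \<otimes>\<^bsub>L\<^esub> (\<one>\<^bsub>L\<^esub> \<oplus>\<^bsub>L\<^esub> Y)"
  have cbc: "cb \<in> carrier L" using bc Yc by (simp add: cb_def)
  have Ye: "Y = \<ominus>\<^bsub>L\<^esub> sh r cb" using fixY unfolding Phi_def cb_def by simp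
  define P where "P = f \<otimes>\<^bsub>L\<^esub> (\<one>\<^bsub>L\<^esub> \<oplus>\<^bsub>L\<^esub> Y)"
  have PE: "P = mono r \<oplus>\<^bsub>L\<^esub> lo r cb"
  proof -
    have shc: "sh r cb \<in> carrier L" using cbc by simp
    have "P = mono r \<otimes>\<^bsub>L\<^esub> (\<one>\<^bsub>L\<^esub> \<oplus>\<^bsub>L\<^esub> Y) \<oplus>\<^bsub>L\<^esub> cb"
      unfolding P_def f_def cb_def using bc Yc by (simp add: R.l_distr)
    also have "mono r \<otimes>\<^bsub>L\<^esub> (\<one>\<^bsub>L\<^esub> \<oplus>\<^bsub>L\<^esub> Y) = mono r \<oplus>\<^bsub>L\<^esub> \<ominus>\<^bsub>L\<^esub> (mono r \<otimes>\<^bsub>L\<^esub> sh r cb)"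
      unfolding Ye using shc by (simp add: R.r_distr R.r_minus)
    finally have e1: "P = mono r \<oplus>\<^bsub>L\<^esub> \<ominus>\<^bsub>L\<^esub> (mono r \<otimes>\<^bsub>L\<^esub> sh r cb) \<oplus>\<^bsub>L\<^esub> cb" .
    have e2: "cb = lo r cb \<oplus>\<^bsub>L\<^esub> mono r \<otimes>\<^bsub>L\<^esub> sh r cb" by (rule decomp_eq[OF cbc])
    have gen: "a1 \<oplus>\<^bsub>L\<^esub> \<ominus>\<^bsub>L\<^esub> x \<oplus>\<^bsub>L\<^esub> (l \<oplus>\<^bsub>L\<^esub> x) = a1 \<oplus>\<^bsub>L\<^esub> l"
      if "a1 \<in> carrier L" "x \<in> carrier L" "l \<in> carrier L" for a1 x l
      using that by (simp add: R.a_ac R.r_neg1 R.r_neg2 R.r_neg)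
    have "P = mono r \<oplus>\<^bsub>L\<^esub> \<ominus>\<^bsub>L\<^esub> (mono r \<otimes>\<^bsub>L\<^esub> sh r cb) \<oplus>\<^bsub>L\<^esub> (lo r cb \<oplus>\<^bsub>L\<^esub> mono r \<otimes>\<^bsub>L\<^esub> sh r cb)"
      using e1 e2 by simp
    also have "\<dots> = mono r \<oplus>\<^bsub>L\<^esub> lo r cb" using shc cbc by (intro gen) auto
    finally show ?thesis .
  qed
  have pcb: "pdvd 1 cb"
  proof -
    have "cb = lam_int p (int p ^ 1) \<otimes>\<^bsub>L\<^esub> ((a \<otimes>\<^bsub>L\<^esub> w) \<otimes>\<^bsub>L\<^esub> (\<one>\<^bsub>L\<^esub> \<oplus>\<^bsub>L\<^esub> Y))"
      unfolding cb_def b_def pp_def using ac wc Yc by (simp add: R.m_assoc)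
    then show ?thesis using ac wc Yc pdvd_int_mult[of "(a \<otimes>\<^bsub>L\<^esub> w) \<otimes>\<^bsub>L\<^esub> (\<one>\<^bsub>L\<^esub> \<oplus>\<^bsub>L\<^esub> Y)" 1] by simp
  qed
  have dP: "distinguished p P"
  proof (rule distinguishedI[where r=r])
    show "P \<in> carrier L" using fc Yc by (simp add: P_def)
    show "P r n = 1 mod int p ^ n" for n unfolding PE by (simp add: add_L lam_add_def mono_def lo_def)
    show "P k n = 0" if "k > r" for k n using that unfolding PE by (simp add: add_L lam_add_def mono_def lo_def)
    show "P k 1 = 0" if "k < r" for k using that pcb carrier_mod[OF cbc] unfolding PE pdvd_def
      by (simp add: add_L lam_add_def mono_def lo_def)
  qed
  define q where "q = w \<otimes>\<^bsub>L\<^esub> (\<one>\<^bsub>L\<^esub> \<oplus>\<^bsub>L\<^esub> Y)"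
  have qc: "q \<in> carrier L" using wc Yc by (simp add: q_def)
  have "u \<otimes>\<^bsub>L\<^esub> q = (v \<otimes>\<^bsub>L\<^esub> w) \<otimes>\<^bsub>L\<^esub> P"
    unfolding uf q_def P_def using vc wc fc Yc by (simp add: R.m_ac)
  also have "\<dots> = P" using vw fc Yc by (simp add: P_def)
  finally show ?thesis using dP qc by auto
qed


lemma pdvd_0[simp]: "g \<in> carrier L \<Longrightarrow> pdvd 0 g" unfolding pdvd_def by simp

lemma int_pow_mult: "lam_int p (int p ^ a) \<otimes>\<^bsub>L\<^esub> lam_int p (int p ^ b) = lam_int p (int p ^ (a + b))"
  by (simp add: lam_int_mult power_add)

lemma factor_p: assumes gc: "g \<in> carrier L" and nl: "\<not> pdvd l g"
  shows "\<exists>m<l. \<exists>u\<in>carrier L. \<not> pdvd 1 u \<and> g = lam_int p (int p ^ m) \<otimes>\<^bsub>L\<^esub> u"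
proof -
  have ex: "\<exists>m. \<not> pdvd (Suc m) g"
  proof (cases l)
    case 0 then show ?thesis using nl gc by simp
  next
    case (Suc l') then show ?thesis using nl by blast
  qed
  define m where "m = (LEAST m. \<not> pdvd (Suc m) g)"
  have nS: "\<not> pdvd (Suc m) g" unfolding m_def using LeastI_ex[OF ex] .
  have pm: "pdvd m g"
  proof (cases m)
    case 0 then show ?thesis using gc by simp
  next
    case (Suc m') then have "m' < m" by simp
    then show ?thesis using not_less_Least[of m' "\<lambda>m. \<not> pdvd (Suc m) g"] Suc unfolding m_def by simp
  qed
  have ml: "m < l"
  proof (rule ccontr)
    assume "\<not> m < l"
    then show False using pdvd_mono[OF gc pm, of l] nl by simp
  qed
  obtain u where uc: "u \<in> carrier L" and ge: "g = lam_int p (int p ^ m) \<otimes>\<^bsub>L\<^esub> u"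
    using pdvd_factor[OF gc pm] by blast
  have "\<not> pdvd 1 u"
  proof
    assume "pdvd 1 u"
    then obtain u' where u'c: "u' \<in> carrier L" and ue: "u = lam_int p (int p ^ 1) \<otimes>\<^bsub>L\<^esub> u'"
      using pdvd_factor[OF uc] by blast
    have "g = lam_int p (int p ^ (Suc m)) \<otimes>\<^bsub>L\<^esub> u'"
      unfolding ge ue using u'c by (simp add: R.m_assoc[symmetric] lam_int_mult mult.commute)
    then show False using nS pdvd_int_mult[OF u'c, of "Suc m"] by simp
  qed
  then show ?thesis using ml uc ge by blast
qed

lemma factor_nonzero: assumes gc: "g \<in> carrier L" and gz: "g \<noteq> \<zero>\<^bsub>L\<^esub>"
  shows "\<exists>m. \<exists>u\<in>carrier L. \<not> pdvd 1 u \<and> g = lam_int p (int p ^ m) \<otimes>\<^bsub>L\<^esub> u"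
proof -
  obtain i n where "g i n \<noteq> 0" using gz unfolding zero_L by (meson ext)
  then have "\<not> pdvd n g" unfolding pdvd_def by blast
  then show ?thesis using factor_p[OF gc] by blast
qed

lemma dist_mult: assumes dP: "distinguished p P" and dQ: "distinguished p Q"
  shows "distinguished p (P \<otimes>\<^bsub>L\<^esub> Q)"
proof -
  obtain r1 where Pc: "P \<in> carrier L" and P1: "\<And>n. P r1 n = 1 mod int p ^ n" and P2: "\<And>k n. k > r1 \<Longrightarrow> P k n = 0"
    and P3: "\<And>k. k < r1 \<Longrightarrow> P k 1 = 0" using distinguishedD[OF dP] by blast
  obtain r2 where Qc: "Q \<in> carrier L" and Q1: "\<And>n. Q r2 n = 1 mod int p ^ n" and Q2: "\<And>k n. k > r2 \<Longrightarrow> Q k n = 0"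
    and Q3: "\<And>k. k < r2 \<Longrightarrow> Q k 1 = 0" using distinguishedD[OF dQ] by blast
  show ?thesis
  proof (rule distinguishedI[where r="r1 + r2"])
    show "P \<otimes>\<^bsub>L\<^esub> Q \<in> carrier L" using Pc Qc by simp
    show "(P \<otimes>\<^bsub>L\<^esub> Q) (r1 + r2) n = 1 mod int p ^ n" for n
    proof -
      have "(\<Sum>i\<le>r1+r2. P i n * Q (r1 + r2 - i) n) = (\<Sum>i\<le>r1+r2. if i = r1 then (1 mod int p ^ n) * (1 mod int p ^ n) else 0)"
      proof (rule sum.cong)
        fix i assume "i \<in> {..r1+r2}"
        show "P i n * Q (r1 + r2 - i) n = (if i = r1 then (1 mod int p ^ n) * (1 mod int p ^ n) else 0)"
        proof (cases "i < r1")
          case True then show ?thesis using Q2[of "r1 + r2 - i" n] by simp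
        next
          case False then show ?thesis using P1 Q1 P2[of i n] by (cases "i = r1") auto
        qed
      qed simp
      also have "\<dots> = (1 mod int p ^ n) * (1 mod int p ^ n)" by simp
      finally show ?thesis by (simp add: mult_L lam_mult_def mod_mult_eq)
    qed
    show "(P \<otimes>\<^bsub>L\<^esub> Q) k n = 0" if "k > r1 + r2" for k n
    proof -
      have "(\<Sum>i\<le>k. P i n * Q (k - i) n) = 0"
      proof (rule sum.neutral, intro ballI)
        fix i assume "i \<in> {..k}"
        show "P i n * Q (k - i) n = 0"
        proof (cases "i > r1")
          case True then show ?thesis using P2 by simp
        next
          case False then show ?thesis using Q2[of "k - i" n] that by simp
        qed
      qed
      then show ?thesis by (simp add: mult_L lam_mult_def)
    qed
    show "(P \<otimes>\<^bsub>L\<^esub> Q) k 1 = 0" if "k < r1 + r2" for k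
    proof -
      have "(\<Sum>i\<le>k. P i 1 * Q (k - i) 1) = 0"
      proof (rule sum.neutral, intro ballI)
        fix i assume "i \<in> {..k}"
        show "P i 1 * Q (k - i) 1 = 0"
        proof (cases "i < r1")
          case True then show ?thesis using P3 by simp
        next
          case False
          show ?thesis
          proof (cases "i = r1")
            case True then have "k - i < r2" using that \<open>i \<in> {..k}\<close> by auto
            then have "Q (k - i) 1 = 0" using Q3[of "k - i"] by simp
            then show ?thesis by simp
          next
            case False then show ?thesis using P2[of i 1] \<open>\<not> i < r1\<close> by simp
          qed
        qed
      qed
      then show ?thesis by (simp add: mult_L lam_mult_def)
    qed
  qed
qed

lemma dist_mono: "distinguished p (mono N)"
  by (rule distinguishedI[where r=N]) (auto simp: mono_def intro: mono_closed[unfolded mono_def])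

end


locale LM =
  fixes p :: nat and A :: "(lam, 'a, 'm) module_scheme"
  assumes prime_p: "prime p" and modA: "module (Lambda p) A"

sublocale LM \<subseteq> LP p using LM.prime_p modA module.axioms(1) LP.intro LM_axioms by metis
sublocale LM \<subseteq> MA: module "Lambda p" A by (rule modA)

context LM begin

abbreviation pw :: "nat \<Rightarrow> lam" where "pw k \<equiv> lam_int p (int p ^ k)"
abbreviation sm (infixr "\<cdot>" 75) where "g \<cdot> x \<equiv> g \<odot>\<^bsub>A\<^esub> x"
abbreviation "CA \<equiv> carrier A"
abbreviation "z0 \<equiv> \<zero>\<^bsub>A\<^esub>"

lemma sm_assoc: "g \<in> carrier L \<Longrightarrow> h \<in> carrier L \<Longrightarrow> x \<in> CA \<Longrightarrow> (g \<otimes>\<^bsub>L\<^esub> h) \<cdot> x = g \<cdot> (h \<cdot> x)"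
  by (rule MA.smult_assoc1)
lemma sm_comm: "g \<in> carrier L \<Longrightarrow> h \<in> carrier L \<Longrightarrow> x \<in> CA \<Longrightarrow> g \<cdot> (h \<cdot> x) = h \<cdot> (g \<cdot> x)"
  by (metis MA.smult_assoc1 R.m_comm)
lemma pw_add: "x \<in> CA \<Longrightarrow> pw a \<cdot> (pw b \<cdot> x) = pw (a + b) \<cdot> x"
  by (simp add: sm_assoc[symmetric] int_pow_mult)
lemma mono_mult: "mono a \<otimes>\<^bsub>L\<^esub> mono b = mono (a + b)"
  by (subst mult_mono) (auto simp: mono_def intro!: ext mono_closed[unfolded mono_def])
lemma mono_add: "x \<in> CA \<Longrightarrow> mono a \<cdot> (mono b \<cdot> x) = mono (a + b) \<cdot> x"
  by (simp add: sm_assoc[symmetric] mono_mult)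
lemma pw0[simp]: "x \<in> CA \<Longrightarrow> pw 0 \<cdot> x = x" by (simp add: lam_int_one)
lemma mono0[simp]: "x \<in> CA \<Longrightarrow> mono 0 \<cdot> x = x" by (simp add: one_eq[symmetric])
lemma sm_zero[simp]: "g \<in> carrier L \<Longrightarrow> g \<cdot> z0 = z0" by simp

definition kap :: "'a \<Rightarrow> nat" where "kap x = (LEAST k. pw k \<cdot> x = z0)"

lemma kapI: assumes "x \<in> Mtors p A" shows "pw (kap x) \<cdot> x = z0" and "\<And>k. pw k \<cdot> x = z0 \<Longrightarrow> kap x \<le> k"
proof -
  obtain k where "pw k \<cdot> x = z0" using assms unfolding Mtors_def by blast
  then show "pw (kap x) \<cdot> x = z0" unfolding kap_def by (rule LeastI)
  show "\<And>k. pw k \<cdot> x = z0 \<Longrightarrow> kap x \<le> k" unfolding kap_def by (rule Least_le)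
qed

lemma kap_above: assumes "x \<in> CA" "pw k \<cdot> x = z0" "k \<ge> kap' " "kap' = kap x" shows "pw k \<cdot> x = z0" using assms by simp

lemma pw_kill_mono: assumes "x \<in> CA" "pw k \<cdot> x = z0" "k \<le> k'" shows "pw k' \<cdot> x = z0"
proof -
  have "pw k' \<cdot> x = pw (k' - k) \<cdot> (pw k \<cdot> x)" using pw_add[of x "k' - k" k] assms(1,3) by simp
  also have "\<dots> = pw (k' - k) \<cdot> z0" using assms(2) by simp
  finally show ?thesis by simp
qed

lemma ord_kap: "ord_p p A x = p ^ kap x" by (simp add: ord_p_def kap_def)

lemma M_sm: assumes "x \<in> Mtors p A" "g \<in> carrier L" shows "g \<cdot> x \<in> Mtors p A"
proof -
  obtain k where k: "x \<in> CA" "pw k \<cdot> x = z0" using assms unfolding Mtors_def by blast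
  then have "pw k \<cdot> (g \<cdot> x) = z0" using assms sm_comm[of "pw k" g x] by simp
  then show ?thesis unfolding Mtors_def using k assms by auto
qed

lemma kap_sm_le: assumes "x \<in> Mtors p A" "g \<in> carrier L" shows "kap (g \<cdot> x) \<le> kap x"
proof -
  have xc: "x \<in> CA" using assms unfolding Mtors_def by simp
  have "pw (kap x) \<cdot> (g \<cdot> x) = z0" using kapI(1)[OF assms(1)] sm_comm[of "pw (kap x)" g x] xc assms by simp
  then show ?thesis using kapI(2)[OF M_sm[OF assms]] by blast
qed

lemma ess_lemma: assumes yM: "y \<in> Mtors p A"
  shows "\<exists>e J. (\<forall>j\<ge>J. kap (mono j \<cdot> y) = e) \<and> (\<forall>j. e \<le> kap (mono j \<cdot> y)) \<and> ess_ord p A y = p ^ e"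
proof -
  have yc: "y \<in> CA" using yM unfolding Mtors_def by simp
  define e where "e = (LEAST e. \<exists>j. kap (mono j \<cdot> y) = e)"
  have "\<exists>j. kap (mono j \<cdot> y) = e" unfolding e_def by (rule LeastI_ex) blast
  then obtain J where J: "kap (mono J \<cdot> y) = e" by blast
  have lb: "e \<le> kap (mono j \<cdot> y)" for j unfolding e_def by (rule Least_le) auto
  have eq: "kap (mono j \<cdot> y) = e" if "j \<ge> J" for j
  proof -
    have "mono j \<cdot> y = mono (j - J) \<cdot> (mono J \<cdot> y)" using that yc by (simp add: mono_add)
    then have "kap (mono j \<cdot> y) \<le> kap (mono J \<cdot> y)" using kap_sm_le[OF M_sm[OF yM mono_closed]] by simp
    then show ?thesis using J lb[of j] by simp
  qed
  have "ess_ord p A y = p ^ e"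
    unfolding ess_ord_def T_pow ord_kap
  proof (rule the_equality)
    show "\<exists>J. \<forall>j\<ge>J. p ^ kap (mono j \<cdot> y) = p ^ e" using eq by auto
    fix e' assume "\<exists>J'. \<forall>j\<ge>J'. p ^ kap (mono j \<cdot> y) = e'"
    then obtain J' where "\<forall>j\<ge>J'. p ^ kap (mono j \<cdot> y) = e'" by blast
    then have "p ^ kap (mono (max J J') \<cdot> y) = e'" by simp
    then show "e' = p ^ e" using eq[of "max J J'"] by simp
  qed
  then show ?thesis using eq lb by blast
qed

end

context LM begin

lemma sm_minus: "g \<in> carrier L \<Longrightarrow> x \<in> CA \<Longrightarrow> y \<in> CA \<Longrightarrow> g \<cdot> (x \<ominus>\<^bsub>A\<^esub> y) = g \<cdot> x \<ominus>\<^bsub>A\<^esub> g \<cdot> y"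
  by (simp add: MA.M.minus_eq MA.smult_r_distr MA.smult_r_minus)

lemma part3: assumes x: "x \<in> CA - Dpart p A" and c: "c \<in> Lpart p A" and z: "z \<in> Mtors p A"
  and e: "lam_int p (int p ^ delta p A x) \<cdot> x = c \<oplus>\<^bsub>A\<^esub> z"
  shows "c \<notin> {lam_int p (int p) \<cdot> y | y. y \<in> Lpart p A}"
proof
  assume "c \<in> {lam_int p (int p) \<cdot> y | y. y \<in> Lpart p A}"
  then obtain y where y: "y \<in> Lpart p A" and cy: "c = lam_int p (int p) \<cdot> y" by blast
  have xc: "x \<in> CA" and xD: "x \<notin> Dpart p A" using x by auto
  have yc: "y \<in> CA" using y unfolding Lpart_def by simp
  have zc: "z \<in> CA" using z unfolding Mtors_def by simp
  have cc: "c \<in> CA" using c unfolding Lpart_def by simp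
  define d where "d = delta p A x"
  show False
  proof (cases "d = 0")
    case True
    then have "x = c \<oplus>\<^bsub>A\<^esub> z" using e xc unfolding d_def by (simp add: lam_int_one)
    then show False using xD c z unfolding Dpart_def by blast
  next
    case False
    define x' where "x' = pw (d - 1) \<cdot> x"
    have x'c: "x' \<in> CA" using xc by (simp add: x'_def)
    have "pw d \<cdot> x = pw 1 \<cdot> x'" unfolding x'_def using xc pw_add[of x 1 "d - 1"] False by simp
    then have e2: "pw 1 \<cdot> x' = c \<oplus>\<^bsub>A\<^esub> z" using e unfolding d_def by simp
    define w where "w = x' \<ominus>\<^bsub>A\<^esub> y"
    have wc: "w \<in> CA" using x'c yc by (simp add: w_def)
    have "pw 1 \<cdot> w = pw 1 \<cdot> x' \<ominus>\<^bsub>A\<^esub> pw 1 \<cdot> y" unfolding w_def using x'c yc by (simp add: sm_minus)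
    also have "\<dots> = z" using e2 cy cc zc yc by (simp add: MA.M.minus_eq MA.M.a_ac MA.M.r_neg MA.M.r_neg2)
    finally have pw1: "pw 1 \<cdot> w = z" .
    obtain k where "pw k \<cdot> z = z0" using z unfolding Mtors_def by blast
    then have "pw (k + 1) \<cdot> w = z0" using pw_add[OF wc, of k 1] pw1 by simp
    then have wM: "w \<in> Mtors p A" unfolding Mtors_def using wc by blast
    have "x' = y \<oplus>\<^bsub>A\<^esub> w" unfolding w_def using x'c yc by (simp add: MA.M.minus_eq MA.M.a_ac MA.M.r_neg1 MA.M.r_neg2 MA.M.r_neg)
    then have x'D: "x' \<in> Dpart p A" using y wM unfolding Dpart_def by blast
    show False
    proof (cases "d - 1 = 0")
      case True then show False using x'D xD xc by (simp add: x'_def lam_int_one)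
    next
      case False
      have "d - 1 < d" using False by simp
      then have "\<not> (0 < d - 1 \<and> lam_int p (int p ^ (d - 1)) \<cdot> x \<in> Dpart p A)"
        unfolding d_def delta_def by (rule not_less_Least)
      then show False using False x'D unfolding x'_def by simp
    qed
  qed
qed


lemma part1: assumes xM: "x \<in> Mtors p A" and pl: "p \<le> p ^ l" and es: "ess_ord p A x = p ^ l"
  and gc: "g \<in> carrier L" and gx: "g \<cdot> x = z0"
  shows "\<exists>h\<in>carrier L. g = lam_int p (int p ^ l) \<otimes>\<^bsub>L\<^esub> h"
proof (cases "pdvd l g")
  case True then show ?thesis using pdvd_factor[OF gc] by blast
next
  case False
  have xc: "x \<in> CA" using xM unfolding Mtors_def by simp
  obtain m u where ml: "m < l" and uc: "u \<in> carrier L" and nu: "\<not> pdvd 1 u" and ge: "g = pw m \<otimes>\<^bsub>L\<^esub> u"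
    using factor_p[OF gc False] by blast
  obtain r a v w where ac: "a \<in> carrier L" and vc: "v \<in> carrier L" and wc: "w \<in> carrier L"
    and ue: "u = lam_int p (int p) \<otimes>\<^bsub>L\<^esub> a \<oplus>\<^bsub>L\<^esub> mono r \<otimes>\<^bsub>L\<^esub> v" and vw: "v \<otimes>\<^bsub>L\<^esub> w = \<one>\<^bsub>L\<^esub>"
    using nu_decomp[OF uc nu] by blast
  obtain e J where eJ: "\<forall>j\<ge>J. kap (mono j \<cdot> x) = e" and ee: "ess_ord p A x = p ^ e"
    using ess_lemma[OF xM] by blast
  have el: "e = l" using ee es p_gt1 power_inject_exp by metis
  have l1: "l \<ge> 1" using pl p_gt1 by (cases l) auto
  define X where "X = mono J \<cdot> x"
  have Xc: "X \<in> CA" using xc by (simp add: X_def)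
  have XM: "X \<in> Mtors p A" using M_sm[OF xM mono_closed] by (simp add: X_def)
  have kX: "kap X = l" using eJ el by (simp add: X_def)
  define y where "y = pw (l - 1) \<cdot> X"
  have yc: "y \<in> CA" using Xc by (simp add: y_def)
  have py: "lam_int p (int p) \<cdot> y = z0"
  proof -
    have "lam_int p (int p) \<cdot> y = pw (1 + (l - 1)) \<cdot> X" unfolding y_def using pw_add[OF Xc, of 1 "l - 1"] by simp
    also have "1 + (l - 1) = l" using l1 by simp
    finally show ?thesis using kapI(1)[OF XM] kX by simp
  qed
  have uy: "u \<cdot> y = z0"
  proof -
    have "u \<cdot> y = pw (l - 1) \<cdot> (u \<cdot> X)" unfolding y_def using uc Xc sm_comm by simp
    also have "pw (l - 1) = pw (l - 1 - m) \<otimes>\<^bsub>L\<^esub> pw m" using ml by (simp add: int_pow_mult)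
    also have "(pw (l - 1 - m) \<otimes>\<^bsub>L\<^esub> pw m) \<cdot> (u \<cdot> X) = pw (l - 1 - m) \<cdot> (g \<cdot> X)"
      unfolding ge using uc Xc by (simp add: sm_assoc)
    also have "g \<cdot> X = mono J \<cdot> (g \<cdot> x)" unfolding X_def using gc xc sm_comm by simp
    finally show ?thesis using gx by simp
  qed
  have "u \<cdot> y = a \<cdot> (lam_int p (int p) \<cdot> y) \<oplus>\<^bsub>A\<^esub> mono r \<cdot> (v \<cdot> y)"
    unfolding ue using ac vc yc by (simp add: MA.smult_l_distr sm_assoc sm_comm[of "lam_int p (int p)" a])
  then have rv: "mono r \<cdot> (v \<cdot> y) = z0" using uy py yc vc ac by simp
  have "mono r \<cdot> y = (w \<otimes>\<^bsub>L\<^esub> v) \<cdot> (mono r \<cdot> y)" using vw wc vc yc by (simp add: R.m_comm)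
  also have "\<dots> = w \<cdot> (mono r \<cdot> (v \<cdot> y))" using wc vc yc by (simp add: sm_assoc sm_comm[of v "mono r"])
  finally have ry: "mono r \<cdot> y = z0" using rv wc by simp
  have "mono r \<cdot> y = pw (l - 1) \<cdot> (mono (r + J) \<cdot> x)"
    unfolding y_def X_def using xc sm_comm[of "mono r" "pw (l - 1)" "mono J \<cdot> x"] mono_add[of x r J] by simp
  moreover have "kap (mono (r + J) \<cdot> x) = l" using eJ el by simp
  ultimately have "l \<le> l - 1" using ry kapI(2)[OF M_sm[OF xM mono_closed]] by metis
  then show ?thesis using l1 by simp
qed

end

context LM begin

abbreviation "gen S \<equiv> gen_submod A (carrier L) S"
abbreviation "ssub H \<equiv> scal_submod A (carrier L) H"
abbreviation "pp \<equiv> lam_int p (int p)"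

lemma ssubD: assumes "ssub H"
  shows "H \<subseteq> CA" "z0 \<in> H" "\<And>x y. x \<in> H \<Longrightarrow> y \<in> H \<Longrightarrow> x \<oplus>\<^bsub>A\<^esub> y \<in> H"
    "\<And>a x. a \<in> carrier L \<Longrightarrow> x \<in> H \<Longrightarrow> a \<cdot> x \<in> H"
  using assms unfolding scal_submod_def by auto

lemma ssub_minus: assumes "ssub H" "x \<in> H" "y \<in> H" shows "x \<ominus>\<^bsub>A\<^esub> y \<in> H"
proof -
  have yc: "y \<in> CA" using assms ssubD(1) by blast
  have "\<ominus>\<^bsub>A\<^esub> y = (\<ominus>\<^bsub>L\<^esub> \<one>\<^bsub>L\<^esub>) \<cdot> y" using yc by (simp add: MA.smult_l_minus)
  then have "\<ominus>\<^bsub>A\<^esub> y \<in> H" using ssubD(4)[OF assms(1) _ assms(3), of "\<ominus>\<^bsub>L\<^esub> \<one>\<^bsub>L\<^esub>"] by simp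
  then show ?thesis using assms ssubD(3) by (simp add: MA.M.minus_eq)
qed

lemma ssub_carrier: "ssub CA" unfolding scal_submod_def by auto

lemma gen_least: "ssub H \<Longrightarrow> S \<subseteq> H \<Longrightarrow> gen S \<subseteq> H"
  unfolding gen_submod_def by blast

lemma gen_incl: "S \<subseteq> gen S" unfolding gen_submod_def by blast

lemma gen_ssub: assumes "S \<subseteq> CA" shows "ssub (gen S)"
proof -
  have ne: "CA \<in> {H. ssub H \<and> S \<subseteq> H}" using ssub_carrier assms by blast
  show ?thesis unfolding scal_submod_def
  proof (intro conjI ballI)
    show "gen S \<subseteq> CA" unfolding gen_submod_def using ne by blast
    show "z0 \<in> gen S" unfolding gen_submod_def scal_submod_def by blast
    show "x \<oplus>\<^bsub>A\<^esub> y \<in> gen S" if "x \<in> gen S" "y \<in> gen S" for x y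
      using that unfolding gen_submod_def scal_submod_def by blast
    show "a \<cdot> x \<in> gen S" if "a \<in> carrier L" "x \<in> gen S" for a x
      using that unfolding gen_submod_def scal_submod_def by blast
  qed
qed

lemma gen_carrier: "S \<subseteq> CA \<Longrightarrow> gen S \<subseteq> CA" using gen_ssub ssubD(1) by blast

lemma gen_mono: "S \<subseteq> T \<Longrightarrow> T \<subseteq> CA \<Longrightarrow> gen S \<subseteq> gen T"
  using gen_least[OF gen_ssub] gen_incl by (meson order_trans)

lemma gen_empty: "gen {} = {z0}"
proof
  have "ssub {z0}" unfolding scal_submod_def by auto
  then show "gen {} \<subseteq> {z0}" using gen_least by blast
  show "{z0} \<subseteq> gen {}" using gen_ssub[of "{}"] ssubD(2) by auto
qed

lemma gen_insert: assumes S: "S \<subseteq> CA" and s: "s \<in> CA"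
  shows "gen (insert s S) = {f \<cdot> s \<oplus>\<^bsub>A\<^esub> z | f z. f \<in> carrier L \<and> z \<in> gen S}"
    (is "_ = ?R")
proof
  have gS: "ssub (gen S)" using gen_ssub[OF S] .
  have gSc: "gen S \<subseteq> CA" using gen_carrier[OF S] .
  have "ssub ?R" unfolding scal_submod_def
  proof (intro conjI ballI)
    show "?R \<subseteq> CA" using gSc s by auto
    have "\<zero>\<^bsub>L\<^esub> \<cdot> s \<oplus>\<^bsub>A\<^esub> z0 = z0" using s by simp
    then show "z0 \<in> ?R" using ssubD(2)[OF gS] by (metis (mono_tags, lifting) R.zero_closed mem_Collect_eq)
    fix x y assume "x \<in> ?R" "y \<in> ?R"
    then obtain f1 z1 f2 z2 where x: "x = f1 \<cdot> s \<oplus>\<^bsub>A\<^esub> z1" "f1 \<in> carrier L" "z1 \<in> gen S"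
      and y: "y = f2 \<cdot> s \<oplus>\<^bsub>A\<^esub> z2" "f2 \<in> carrier L" "z2 \<in> gen S" by blast
    have z1c: "z1 \<in> CA" and z2c: "z2 \<in> CA" using x y gSc by auto
    have "x \<oplus>\<^bsub>A\<^esub> y = (f1 \<oplus>\<^bsub>L\<^esub> f2) \<cdot> s \<oplus>\<^bsub>A\<^esub> (z1 \<oplus>\<^bsub>A\<^esub> z2)"
      using x y z1c z2c s by (simp add: MA.smult_l_distr MA.M.a_ac)
    moreover have "z1 \<oplus>\<^bsub>A\<^esub> z2 \<in> gen S" using ssubD(3)[OF gS] x y by blast
    ultimately show "x \<oplus>\<^bsub>A\<^esub> y \<in> ?R" using x y by blast
  next
    fix a x assume a: "a \<in> carrier L" and "x \<in> ?R"
    then obtain f1 z1 where x: "x = f1 \<cdot> s \<oplus>\<^bsub>A\<^esub> z1" "f1 \<in> carrier L" "z1 \<in> gen S" by blast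
    have z1c: "z1 \<in> CA" using x gSc by auto
    have "a \<cdot> x = (a \<otimes>\<^bsub>L\<^esub> f1) \<cdot> s \<oplus>\<^bsub>A\<^esub> a \<cdot> z1" using x a z1c s by (simp add: MA.smult_r_distr sm_assoc)
    moreover have "a \<cdot> z1 \<in> gen S" using ssubD(4)[OF gS a] x by blast
    ultimately show "a \<cdot> x \<in> ?R" using x a by blast
  qed
  moreover have "insert s S \<subseteq> ?R"
  proof
    fix t assume "t \<in> insert s S"
    then show "t \<in> ?R"
    proof
      assume "t = s"
      then have "t = \<one>\<^bsub>L\<^esub> \<cdot> s \<oplus>\<^bsub>A\<^esub> z0" using s by simp
      then show ?thesis using ssubD(2)[OF gS] by blast
    next
      assume "t \<in> S"
      then have "t = \<zero>\<^bsub>L\<^esub> \<cdot> s \<oplus>\<^bsub>A\<^esub> t" using s S by auto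
      then show ?thesis using gen_incl \<open>t \<in> S\<close> by blast
    qed
  qed
  ultimately show "gen (insert s S) \<subseteq> ?R" by (rule gen_least)
next
  have gI: "ssub (gen (insert s S))" using gen_ssub S s by simp
  have "gen S \<subseteq> gen (insert s S)" using gen_mono[of S "insert s S"] S s by auto
  moreover have "s \<in> gen (insert s S)" using gen_incl by blast
  ultimately show "?R \<subseteq> gen (insert s S)" using ssubD(3,4)[OF gI] by blast
qed


lemma decomp_unit: assumes uc: "u \<in> carrier L" and z: "\<And>i. i < r \<Longrightarrow> u i 1 = 0" and nz: "u r 1 \<noteq> 0"
  shows "\<exists>a\<in>carrier L. \<exists>w\<in>carrier L. u = pp \<otimes>\<^bsub>L\<^esub> a \<oplus>\<^bsub>L\<^esub> mono r \<otimes>\<^bsub>L\<^esub> sh r u \<and> sh r u \<otimes>\<^bsub>L\<^esub> w = \<one>\<^bsub>L\<^esub>"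
proof -
  obtain a where "a \<in> carrier L" "u = pp \<otimes>\<^bsub>L\<^esub> a \<oplus>\<^bsub>L\<^esub> mono r \<otimes>\<^bsub>L\<^esub> sh r u" using decomp[OF uc z] by blast
  moreover have "sh r u 0 1 \<noteq> 0" using nz by (simp add: sh_def)
  then obtain w where "w \<in> carrier L" "sh r u \<otimes>\<^bsub>L\<^esub> w = \<one>\<^bsub>L\<^esub>" using unit_inv[OF sh_closed[OF uc]] by blast
  ultimately show ?thesis by blast
qed

lemma A_cancel: assumes "x \<in> CA" "y \<in> CA" "z = x \<oplus>\<^bsub>A\<^esub> y" shows "y = z \<ominus>\<^bsub>A\<^esub> x"
proof -
  have "z \<ominus>\<^bsub>A\<^esub> x = (y \<oplus>\<^bsub>A\<^esub> x) \<oplus>\<^bsub>A\<^esub> \<ominus>\<^bsub>A\<^esub> x" using assms by (simp add: MA.M.minus_eq MA.M.a_comm)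
  also have "\<dots> = y \<oplus>\<^bsub>A\<^esub> (x \<oplus>\<^bsub>A\<^esub> \<ominus>\<^bsub>A\<^esub> x)" using assms by (simp add: MA.M.a_assoc)
  also have "\<dots> = y" using assms by (simp add: MA.M.r_neg)
  finally show ?thesis by simp
qed

lemma R_cancel: assumes "x \<in> carrier L" "y \<in> carrier L" "z = x \<oplus>\<^bsub>L\<^esub> y" shows "y = z \<oplus>\<^bsub>L\<^esub> \<ominus>\<^bsub>L\<^esub> x"
proof -
  have "z \<oplus>\<^bsub>L\<^esub> \<ominus>\<^bsub>L\<^esub> x = (y \<oplus>\<^bsub>L\<^esub> x) \<oplus>\<^bsub>L\<^esub> \<ominus>\<^bsub>L\<^esub> x" using assms by (simp add: R.a_comm)
  also have "\<dots> = y \<oplus>\<^bsub>L\<^esub> (x \<oplus>\<^bsub>L\<^esub> \<ominus>\<^bsub>L\<^esub> x)" using assms by (simp add: R.a_assoc)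
  also have "\<dots> = y" using assms by (simp add: R.r_neg)
  finally show ?thesis by simp
qed

lemma mono_comm: "x \<in> CA \<Longrightarrow> mono a \<cdot> (mono b \<cdot> x) = mono b \<cdot> (mono a \<cdot> x)"
  by (simp add: mono_add add.commute)

definition nuf :: "lam \<Rightarrow> nat" where "nuf f = (LEAST r. f r 1 \<noteq> 0)"

lemma nufD: assumes "\<not> pdvd 1 f" shows "f (nuf f) 1 \<noteq> 0" "\<And>i. i < nuf f \<Longrightarrow> f i 1 = 0"
proof -
  have ex: "\<exists>r. f r 1 \<noteq> 0" using assms unfolding pdvd_def by blast
  show "f (nuf f) 1 \<noteq> 0" unfolding nuf_def using LeastI_ex[OF ex] .
  show "\<And>i. i < nuf f \<Longrightarrow> f i 1 = 0" unfolding nuf_def using not_less_Least by blast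
qed

lemma Qlem: assumes "finite S"
  shows "S \<subseteq> CA \<Longrightarrow> ssub X' \<Longrightarrow> (\<forall>z\<in>gen S. pp \<cdot> z \<in> X') \<Longrightarrow>
    \<exists>a. \<forall>z\<in>gen S. (\<exists>j. mono j \<cdot> z \<in> X') \<longrightarrow> mono a \<cdot> z \<in> X'"
  using assms
proof (induction S rule: finite_induct)
  case empty
  then show ?case using gen_empty ssubD(2)[OF empty(2)] by (intro exI[of _ 0]) simp
next
  case (insert s S)
  have Sc: "S \<subseteq> CA" and sc: "s \<in> CA" using insert.prems by auto
  have XS: "ssub X'" using insert.prems by simp
  have Xc: "X' \<subseteq> CA" using ssubD(1)[OF XS] .
  have Xadd: "x \<in> X' \<Longrightarrow> y \<in> X' \<Longrightarrow> x \<oplus>\<^bsub>A\<^esub> y \<in> X'" for x y using ssubD(3)[OF XS] .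
  have Xsm: "a \<in> carrier L \<Longrightarrow> x \<in> X' \<Longrightarrow> a \<cdot> x \<in> X'" for a x using ssubD(4)[OF XS] .
  have Xmin: "x \<in> X' \<Longrightarrow> y \<in> X' \<Longrightarrow> x \<ominus>\<^bsub>A\<^esub> y \<in> X'" for x y using ssub_minus[OF XS] .
  define GI where "GI = gen (insert s S)"
  have GIe: "GI = {f \<cdot> s \<oplus>\<^bsub>A\<^esub> z | f z. f \<in> carrier L \<and> z \<in> gen S}" unfolding GI_def by (rule gen_insert[OF Sc sc])
  have GIs: "ssub GI" unfolding GI_def using gen_ssub Sc sc by simp
  have GSs: "ssub (gen S)" using gen_ssub[OF Sc] .
  have GSc: "gen S \<subseteq> CA" using gen_carrier[OF Sc] .
  have sGI: "s \<in> GI" unfolding GI_def using gen_incl by blast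
  have hypS: "\<forall>z\<in>gen S. pp \<cdot> z \<in> X'"
    using insert.prems(3) gen_mono[of S "insert s S"] Sc sc by auto
  obtain a1 where a1: "\<And>z. z \<in> gen S \<Longrightarrow> (\<exists>j. mono j \<cdot> z \<in> X') \<Longrightarrow> mono a1 \<cdot> z \<in> X'"
    using insert.IH[OF Sc XS hypS] by blast
  have ppX: "h \<in> carrier L \<Longrightarrow> pp \<cdot> (h \<cdot> s) \<in> X'" for h
    using insert.prems(3) ssubD(4)[OF GIs _ sGI] unfolding GI_def by blast
  define I where "I = {f \<in> carrier L. \<exists>zS\<in>gen S. \<exists>j. mono j \<cdot> (f \<cdot> s \<oplus>\<^bsub>A\<^esub> zS) \<in> X'}"
  have I_mult: "h \<otimes>\<^bsub>L\<^esub> f \<in> I" if h: "h \<in> carrier L" and f: "f \<in> I" for h f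
  proof -
    obtain zS j where fc: "f \<in> carrier L" and zS: "zS \<in> gen S" and j: "mono j \<cdot> (f \<cdot> s \<oplus>\<^bsub>A\<^esub> zS) \<in> X'"
      using f unfolding I_def by blast
    have zSc: "zS \<in> CA" using zS GSc by blast
    have "mono j \<cdot> ((h \<otimes>\<^bsub>L\<^esub> f) \<cdot> s \<oplus>\<^bsub>A\<^esub> h \<cdot> zS) = h \<cdot> (mono j \<cdot> (f \<cdot> s \<oplus>\<^bsub>A\<^esub> zS))"
      using h fc zSc sc by (simp add: sm_assoc MA.smult_r_distr sm_comm[of h "mono j"])
    then have "mono j \<cdot> ((h \<otimes>\<^bsub>L\<^esub> f) \<cdot> s \<oplus>\<^bsub>A\<^esub> h \<cdot> zS) \<in> X'" using Xsm[OF h j] by simp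
    moreover have "h \<cdot> zS \<in> gen S" using ssubD(4)[OF GSs h zS] .
    ultimately show ?thesis unfolding I_def using h fc by blast
  qed
  have I_add: "f \<oplus>\<^bsub>L\<^esub> g \<in> I" if f: "f \<in> I" and g: "g \<in> I" for f g
  proof -
    obtain z1 j1 where fc: "f \<in> carrier L" and z1: "z1 \<in> gen S" and j1: "mono j1 \<cdot> (f \<cdot> s \<oplus>\<^bsub>A\<^esub> z1) \<in> X'"
      using f unfolding I_def by blast
    obtain z2 j2 where gc: "g \<in> carrier L" and z2: "z2 \<in> gen S" and j2: "mono j2 \<cdot> (g \<cdot> s \<oplus>\<^bsub>A\<^esub> z2) \<in> X'"
      using g unfolding I_def by blast
    have z1c: "z1 \<in> CA" and z2c: "z2 \<in> CA" using z1 z2 GSc by auto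
    have "mono (j1 + j2) \<cdot> ((f \<oplus>\<^bsub>L\<^esub> g) \<cdot> s \<oplus>\<^bsub>A\<^esub> (z1 \<oplus>\<^bsub>A\<^esub> z2))
        = mono (j1 + j2) \<cdot> ((f \<cdot> s \<oplus>\<^bsub>A\<^esub> z1) \<oplus>\<^bsub>A\<^esub> (g \<cdot> s \<oplus>\<^bsub>A\<^esub> z2))"
      using fc gc z1c z2c sc by (simp add: MA.smult_l_distr MA.M.a_ac)
    also have "\<dots> = mono j2 \<cdot> (mono j1 \<cdot> (f \<cdot> s \<oplus>\<^bsub>A\<^esub> z1)) \<oplus>\<^bsub>A\<^esub> mono j1 \<cdot> (mono j2 \<cdot> (g \<cdot> s \<oplus>\<^bsub>A\<^esub> z2))"
      using fc gc z1c z2c sc by (simp add: MA.smult_r_distr mono_add add.commute)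
    finally have "mono (j1 + j2) \<cdot> ((f \<oplus>\<^bsub>L\<^esub> g) \<cdot> s \<oplus>\<^bsub>A\<^esub> (z1 \<oplus>\<^bsub>A\<^esub> z2)) \<in> X'"
      using Xadd Xsm j1 j2 by simp
    moreover have "z1 \<oplus>\<^bsub>A\<^esub> z2 \<in> gen S" using ssubD(3)[OF GSs z1 z2] .
    ultimately show ?thesis unfolding I_def using fc gc by blast
  qed
  have I_pp: "pp \<in> I"
  proof -
    have "mono 0 \<cdot> (pp \<cdot> s \<oplus>\<^bsub>A\<^esub> z0) \<in> X'" using sc ppX[of "\<one>\<^bsub>L\<^esub>"] by simp
    then show ?thesis unfolding I_def using ssubD(2)[OF GSs] by auto
  qed
  have I_pph: "pp \<otimes>\<^bsub>L\<^esub> h \<in> I" if "h \<in> carrier L" for h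
    using I_mult[OF that I_pp] that by (simp add: R.m_comm)
  have I_neg: "\<ominus>\<^bsub>L\<^esub> f \<in> I" if "f \<in> I" for f
  proof -
    have fc: "f \<in> carrier L" using that unfolding I_def by simp
    have "\<ominus>\<^bsub>L\<^esub> f = (\<ominus>\<^bsub>L\<^esub> \<one>\<^bsub>L\<^esub>) \<otimes>\<^bsub>L\<^esub> f" using fc by (simp add: R.l_minus)
    then show ?thesis using I_mult[OF _ that, of "\<ominus>\<^bsub>L\<^esub> \<one>\<^bsub>L\<^esub>"] by simp
  qed
  have zdec: "\<exists>f zS. f \<in> I \<and> zS \<in> gen S \<and> z = f \<cdot> s \<oplus>\<^bsub>A\<^esub> zS" if zin: "z \<in> GI" and zj: "mono j \<cdot> z \<in> X'" for z j
  proof -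
    obtain f zS where "z = f \<cdot> s \<oplus>\<^bsub>A\<^esub> zS" "f \<in> carrier L" "zS \<in> gen S" using zin unfolding GIe by blast
    then show ?thesis using zj unfolding I_def by blast
  qed
  show ?case
  proof (cases "\<forall>f\<in>I. pdvd 1 f")
    case True
    show ?thesis
    proof (intro exI[of _ a1] ballI impI)
      fix z assume zG: "z \<in> gen (insert s S)" and "\<exists>j. mono j \<cdot> z \<in> X'"
      then obtain j where j: "mono j \<cdot> z \<in> X'" by blast
      obtain f zS where f: "f \<in> I" and zS: "zS \<in> gen S" and ze: "z = f \<cdot> s \<oplus>\<^bsub>A\<^esub> zS"
        using zdec[of z j] zG j unfolding GI_def by blast
      have fc: "f \<in> carrier L" using f unfolding I_def by simp
      have zSc: "zS \<in> CA" using zS GSc by blast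
      obtain h where hc: "h \<in> carrier L" and fe: "f = lam_int p (int p ^ 1) \<otimes>\<^bsub>L\<^esub> h"
        using pdvd_factor[OF fc] True f by blast
      have fsX: "f \<cdot> s \<in> X'" using ppX[OF hc] fe hc sc by (simp add: sm_assoc)
      have fsc: "f \<cdot> s \<in> CA" using fc sc by simp
      have "mono j \<cdot> z = mono j \<cdot> (f \<cdot> s) \<oplus>\<^bsub>A\<^esub> mono j \<cdot> zS" using ze fsc zSc by (simp add: MA.smult_r_distr)
      then have "mono j \<cdot> zS = mono j \<cdot> z \<ominus>\<^bsub>A\<^esub> mono j \<cdot> (f \<cdot> s)" using fsc zSc by (intro A_cancel) auto
      then have "mono j \<cdot> zS \<in> X'" using Xmin j Xsm[OF mono_closed fsX] by simp
      then have "mono a1 \<cdot> zS \<in> X'" using a1[OF zS] by blast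
      moreover have "mono a1 \<cdot> z = mono a1 \<cdot> (f \<cdot> s) \<oplus>\<^bsub>A\<^esub> mono a1 \<cdot> zS" using ze fsc zSc by (simp add: MA.smult_r_distr)
      ultimately show "mono a1 \<cdot> z \<in> X'" using Xadd Xsm[OF mono_closed fsX] by simp
    qed
  next
    case False
    then have exf: "\<exists>k f. f \<in> I \<and> \<not> pdvd 1 f \<and> nuf f = k" by blast
    define k where "k = (LEAST k. \<exists>f. f \<in> I \<and> \<not> pdvd 1 f \<and> nuf f = k)"
    obtain fs where fs: "fs \<in> I" "\<not> pdvd 1 fs" "nuf fs = k"
      using LeastI_ex[OF exf] unfolding k_def by blast
    have kmin: "k \<le> nuf f" if "f \<in> I" "\<not> pdvd 1 f" for f
      unfolding k_def using that by (intro Least_le) blast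
    have fsc: "fs \<in> carrier L" using fs unfolding I_def by simp
    obtain a' w where a'c: "a' \<in> carrier L" and wc: "w \<in> carrier L"
      and fse: "fs = pp \<otimes>\<^bsub>L\<^esub> a' \<oplus>\<^bsub>L\<^esub> mono k \<otimes>\<^bsub>L\<^esub> sh k fs" and vw: "sh k fs \<otimes>\<^bsub>L\<^esub> w = \<one>\<^bsub>L\<^esub>"
      using decomp_unit[OF fsc, of k] nufD[OF fs(2)] fs(3) by blast
    have vc: "sh k fs \<in> carrier L" using fsc by simp
    have "mono k \<otimes>\<^bsub>L\<^esub> sh k fs = fs \<oplus>\<^bsub>L\<^esub> \<ominus>\<^bsub>L\<^esub> (pp \<otimes>\<^bsub>L\<^esub> a')"
      using R_cancel[OF _ _ fse] a'c vc by simp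
    then have "w \<otimes>\<^bsub>L\<^esub> (fs \<oplus>\<^bsub>L\<^esub> \<ominus>\<^bsub>L\<^esub> (pp \<otimes>\<^bsub>L\<^esub> a')) = mono k \<otimes>\<^bsub>L\<^esub> (sh k fs \<otimes>\<^bsub>L\<^esub> w)"
      using wc vc by (simp add: R.m_ac)
    also have "\<dots> = mono k" using vw by simp
    finally have "mono k \<in> I" using I_mult[OF wc I_add[OF fs(1) I_neg[OF I_pph[OF a'c]]]] by simp
    then obtain z0' j0 where z0': "z0' \<in> gen S" and j0: "mono j0 \<cdot> (mono k \<cdot> s \<oplus>\<^bsub>A\<^esub> z0') \<in> X'"
      unfolding I_def by blast
    have z0'c: "z0' \<in> CA" using z0' GSc by blast
    have fdec: "\<exists>h\<in>carrier L. \<exists>c\<in>carrier L. f = pp \<otimes>\<^bsub>L\<^esub> h \<oplus>\<^bsub>L\<^esub> mono k \<otimes>\<^bsub>L\<^esub> c" if f: "f \<in> I" for f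
    proof -
      have fc: "f \<in> carrier L" using f unfolding I_def by simp
      show ?thesis
      proof (cases "pdvd 1 f")
        case True
        obtain h where hc: "h \<in> carrier L" and fe: "f = lam_int p (int p ^ 1) \<otimes>\<^bsub>L\<^esub> h"
          using pdvd_factor[OF fc True] by blast
        then show ?thesis by (intro bexI[OF _ hc] bexI[of _ "\<zero>\<^bsub>L\<^esub>"]) auto
      next
        case False
        define r where "r = nuf f"
        have kr: "k \<le> r" unfolding r_def using kmin[OF f False] .
        obtain h w' where hc: "h \<in> carrier L" and fe: "f = pp \<otimes>\<^bsub>L\<^esub> h \<oplus>\<^bsub>L\<^esub> mono r \<otimes>\<^bsub>L\<^esub> sh r f"
          using decomp_unit[OF fc, of r] nufD[OF False] unfolding r_def by blast
        have "mono r = mono k \<otimes>\<^bsub>L\<^esub> mono (r - k)" using kr by (simp add: mono_mult)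
        then have "f = pp \<otimes>\<^bsub>L\<^esub> h \<oplus>\<^bsub>L\<^esub> mono k \<otimes>\<^bsub>L\<^esub> (mono (r - k) \<otimes>\<^bsub>L\<^esub> sh r f)"
          using fe fc by (simp add: R.m_assoc)
        moreover have "mono (r - k) \<otimes>\<^bsub>L\<^esub> sh r f \<in> carrier L" using fc by simp
        ultimately show ?thesis using hc by blast
      qed
    qed
    show ?thesis
    proof (intro exI[of _ "j0 + a1"] ballI impI)
      fix z assume zG: "z \<in> gen (insert s S)" and "\<exists>j. mono j \<cdot> z \<in> X'"
      then obtain j where j: "mono j \<cdot> z \<in> X'" by blast
      obtain f zS where f: "f \<in> I" and zS: "zS \<in> gen S" and ze: "z = f \<cdot> s \<oplus>\<^bsub>A\<^esub> zS"
        using zdec[of z j] zG j unfolding GI_def by blast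
      have zSc: "zS \<in> CA" using zS GSc by blast
      obtain h c where hc: "h \<in> carrier L" and cc: "c \<in> carrier L" and fe: "f = pp \<otimes>\<^bsub>L\<^esub> h \<oplus>\<^bsub>L\<^esub> mono k \<otimes>\<^bsub>L\<^esub> c"
        using fdec[OF f] by blast
      define E where "E = mono k \<cdot> s \<oplus>\<^bsub>A\<^esub> z0'"
      have Ec: "E \<in> CA" using sc z0'c by (simp add: E_def)
      define Q where "Q = pp \<cdot> (h \<cdot> s) \<oplus>\<^bsub>A\<^esub> c \<cdot> E"
      have Qc: "Q \<in> CA" using hc cc sc Ec by (simp add: Q_def)
      define z1 where "z1 = zS \<ominus>\<^bsub>A\<^esub> c \<cdot> z0'"
      have z1c: "z1 \<in> CA" using zSc cc z0'c by (simp add: z1_def)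
      have z1G: "z1 \<in> gen S" unfolding z1_def using ssub_minus[OF GSs zS ssubD(4)[OF GSs cc z0']] .
      have "f \<cdot> s = pp \<cdot> (h \<cdot> s) \<oplus>\<^bsub>A\<^esub> c \<cdot> (mono k \<cdot> s)"
        unfolding fe using hc cc sc by (simp add: MA.smult_l_distr sm_assoc sm_comm[of "mono k" c])
      then have zQ: "z = Q \<oplus>\<^bsub>A\<^esub> z1" unfolding ze Q_def z1_def E_def
        using hc cc sc zSc z0'c by (simp add: MA.smult_r_distr MA.M.minus_eq MA.M.a_ac MA.M.r_neg MA.M.r_neg1 MA.M.r_neg2)
      have QX: "mono j0 \<cdot> Q \<in> X'"
      proof -
        have "mono j0 \<cdot> Q = mono j0 \<cdot> (pp \<cdot> (h \<cdot> s)) \<oplus>\<^bsub>A\<^esub> c \<cdot> (mono j0 \<cdot> E)"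
          unfolding Q_def using hc cc sc Ec by (simp add: MA.smult_r_distr sm_comm[of "mono j0" c])
        then show ?thesis using Xadd Xsm[OF mono_closed ppX[OF hc]] Xsm[OF cc] j0 unfolding E_def by simp
      qed
      have e1: "z1 = z \<ominus>\<^bsub>A\<^esub> Q" using A_cancel[OF Qc z1c zQ] .
      have zc: "z \<in> CA" using zQ Qc z1c by simp
      have "mono (j + j0) \<cdot> z1 = mono (j + j0) \<cdot> z \<ominus>\<^bsub>A\<^esub> mono (j + j0) \<cdot> Q"
        unfolding e1 using zc Qc by (simp add: sm_minus)
      also have "mono (j + j0) \<cdot> z = mono j0 \<cdot> (mono j \<cdot> z)" using mono_add[OF zc, of j0 j] by (simp add: add.commute)
      also have "mono (j + j0) \<cdot> Q = mono j \<cdot> (mono j0 \<cdot> Q)" using mono_add[OF Qc, of j j0] by simp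
      finally have "mono (j + j0) \<cdot> z1 = mono j0 \<cdot> (mono j \<cdot> z) \<ominus>\<^bsub>A\<^esub> mono j \<cdot> (mono j0 \<cdot> Q)" .
      then have "mono (j + j0) \<cdot> z1 \<in> X'" using Xmin Xsm[OF mono_closed j] Xsm[OF mono_closed QX] by simp
      then have z1X: "mono a1 \<cdot> z1 \<in> X'" using a1[OF z1G] by blast
      have "mono (j0 + a1) \<cdot> z = mono a1 \<cdot> (mono j0 \<cdot> Q) \<oplus>\<^bsub>A\<^esub> mono j0 \<cdot> (mono a1 \<cdot> z1)"
        unfolding zQ using Qc z1c by (simp add: MA.smult_r_distr mono_add add.commute)
      then show "mono (j0 + a1) \<cdot> z \<in> X'" using Xadd Xsm[OF mono_closed QX] Xsm[OF mono_closed z1X] by simp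
    qed
  qed
qed

end

context LM begin

lemma ssub_pre: assumes X: "ssub X'" and g: "g \<in> carrier L"
  shows "ssub {z \<in> CA. g \<cdot> z \<in> X'}"
  unfolding scal_submod_def
proof (intro conjI ballI)
  show "{z \<in> CA. g \<cdot> z \<in> X'} \<subseteq> CA" by blast
  show "z0 \<in> {z \<in> CA. g \<cdot> z \<in> X'}" using g ssubD(2)[OF X] by simp
  fix x y assume x: "x \<in> {z \<in> CA. g \<cdot> z \<in> X'}" and y: "y \<in> {z \<in> CA. g \<cdot> z \<in> X'}"
  then show "x \<oplus>\<^bsub>A\<^esub> y \<in> {z \<in> CA. g \<cdot> z \<in> X'}"
    using ssubD(3)[OF X] g by (simp add: MA.smult_r_distr)
next
  fix a x assume a: "a \<in> carrier L" and x: "x \<in> {z \<in> CA. g \<cdot> z \<in> X'}"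
  then show "a \<cdot> x \<in> {z \<in> CA. g \<cdot> z \<in> X'}"
    using ssubD(4)[OF X a] g sm_comm[of g a x] by simp
qed

lemma Llem: "\<forall>S. finite S \<longrightarrow> S \<subseteq> CA \<longrightarrow> (\<forall>s\<in>S. pw K \<cdot> s = z0) \<longrightarrow>
   (\<exists>N. \<forall>z\<in>gen S. (\<exists>j. mono j \<cdot> z = z0) \<longrightarrow> mono N \<cdot> z = z0)"
proof (induction K)
  case 0
  show ?case
  proof (intro allI impI)
    fix S :: "'a set" assume "finite S" and Sc0: "S \<subseteq> CA" and k0: "\<forall>s\<in>S. pw 0 \<cdot> s = z0"
    have "s = z0" if sS: "s \<in> S" for s
    proof -
      have sc: "s \<in> CA" using sS Sc0 by blast
      have "pw 0 \<cdot> s = z0" using k0 sS by blast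
      then show ?thesis using pw0[OF sc] by simp
    qed
    then have "S \<subseteq> {z0}" by auto
    moreover have "ssub {z0}" unfolding scal_submod_def by auto
    ultimately have "gen S \<subseteq> {z0}" using gen_least by blast
    then have "\<forall>z\<in>gen S. mono 0 \<cdot> z = z0" by auto
    then show "\<exists>N. \<forall>z\<in>gen S. (\<exists>j. mono j \<cdot> z = z0) \<longrightarrow> mono N \<cdot> z = z0"
      by blast
  qed
next
  case (Suc K)
  show ?case
  proof (intro allI impI)
    fix S :: "'a set" assume fS: "finite S" and Sc: "S \<subseteq> CA" and kill: "\<forall>s\<in>S. pw (Suc K) \<cdot> s = z0"
    define S' where "S' = (\<lambda>s. pp \<cdot> s) ` S"
    have S'c: "S' \<subseteq> CA" using Sc by (auto simp: S'_def)
    have kill': "\<forall>s\<in>S'. pw K \<cdot> s = z0"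
    proof
      fix t assume "t \<in> S'"
      then obtain s where s: "s \<in> S" "t = pp \<cdot> s" by (auto simp: S'_def)
      have sc: "s \<in> CA" using s Sc by blast
      have "pw K \<cdot> (pw 1 \<cdot> s) = pw (K + 1) \<cdot> s" by (rule pw_add[OF sc])
      then show "pw K \<cdot> t = z0" using s kill by simp
    qed
    have fS': "finite S'" using fS by (simp add: S'_def)
    have "\<exists>N. \<forall>z\<in>gen S'. (\<exists>j. mono j \<cdot> z = z0) \<longrightarrow> mono N \<cdot> z = z0"
      using Suc.IH fS' S'c kill' by blast
    then obtain N' where N': "\<And>z. z \<in> gen S' \<Longrightarrow> (\<exists>j. mono j \<cdot> z = z0) \<Longrightarrow> mono N' \<cdot> z = z0"
      by blast
    have X: "ssub (gen S')" using gen_ssub[OF S'c] .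
    have "S \<subseteq> {z \<in> CA. pp \<cdot> z \<in> gen S'}"
    proof
      fix s assume "s \<in> S"
      then have "pp \<cdot> s \<in> S'" "s \<in> CA" using Sc by (auto simp: S'_def)
      then show "s \<in> {z \<in> CA. pp \<cdot> z \<in> gen S'}" using gen_incl[of S'] by blast
    qed
    then have "gen S \<subseteq> {z \<in> CA. pp \<cdot> z \<in> gen S'}"
      using gen_least[OF ssub_pre[OF X lam_int_closed]] by blast
    then have hyp: "\<forall>z\<in>gen S. pp \<cdot> z \<in> gen S'" by blast
    obtain a where a: "\<And>z. z \<in> gen S \<Longrightarrow> (\<exists>j. mono j \<cdot> z \<in> gen S') \<Longrightarrow> mono a \<cdot> z \<in> gen S'"
      using Qlem[OF fS Sc X hyp] by blast
    show "\<exists>N. \<forall>z\<in>gen S. (\<exists>j. mono j \<cdot> z = z0) \<longrightarrow> mono N \<cdot> z = z0"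
    proof (intro exI[of _ "N' + a"] ballI impI)
      fix z assume zG: "z \<in> gen S" and "\<exists>j. mono j \<cdot> z = z0"
      then obtain j where j: "mono j \<cdot> z = z0" by blast
      have zc: "z \<in> CA" using zG gen_carrier[OF Sc] by blast
      have "mono j \<cdot> z \<in> gen S'" using j ssubD(2)[OF X] by simp
      then have "mono a \<cdot> z \<in> gen S'" using a[OF zG] by blast
      moreover have "mono j \<cdot> (mono a \<cdot> z) = z0" using mono_comm[OF zc, of j a] j by simp
      ultimately have "mono N' \<cdot> (mono a \<cdot> z) = z0" using N' by blast
      then show "mono (N' + a) \<cdot> z = z0" using mono_add[OF zc] by simp
    qed
  qed
qed

lemma G0lem: assumes "finite S"
  shows "S \<subseteq> CA \<Longrightarrow> (\<forall>s\<in>S. \<exists>g\<in>carrier L. g \<noteq> \<zero>\<^bsub>L\<^esub> \<and> g \<cdot> s = z0) \<Longrightarrow>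
    \<exists>G K. distinguished p G \<and> (\<forall>s\<in>S. pw K \<cdot> (G \<cdot> s) = z0)"
  using assms
proof (induction S rule: finite_induct)
  case empty
  then show ?case using dist_mono by blast
next
  case (insert s S)
  obtain G K where dG: "distinguished p G" and GK: "\<forall>s\<in>S. pw K \<cdot> (G \<cdot> s) = z0"
    using insert by auto
  have Gc: "G \<in> carrier L" using distinguishedD[OF dG] by blast
  have sc: "s \<in> CA" using insert.prems by simp
  obtain g where gc: "g \<in> carrier L" and gz: "g \<noteq> \<zero>\<^bsub>L\<^esub>" and gs: "g \<cdot> s = z0" using insert.prems by auto
  obtain m u where uc: "u \<in> carrier L" and nu: "\<not> pdvd 1 u" and ge: "g = pw m \<otimes>\<^bsub>L\<^esub> u"
    using factor_nonzero[OF gc gz] by blast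
  obtain q where qc: "q \<in> carrier L" and dP: "distinguished p (u \<otimes>\<^bsub>L\<^esub> q)" using weierstrass[OF uc nu] by blast
  define P where "P = u \<otimes>\<^bsub>L\<^esub> q"
  have Pc: "P \<in> carrier L" using uc qc by (simp add: P_def)
  have Ps: "pw m \<cdot> (P \<cdot> s) = z0"
  proof -
    have "pw m \<cdot> (P \<cdot> s) = (q \<otimes>\<^bsub>L\<^esub> g) \<cdot> s" unfolding P_def ge using uc qc sc by (simp add: sm_assoc[symmetric] R.m_ac)
    also have "\<dots> = q \<cdot> (g \<cdot> s)" using qc gc sc by (simp add: sm_assoc)
    finally show ?thesis using gs qc by simp
  qed
  have "pw (K + m) \<cdot> ((P \<otimes>\<^bsub>L\<^esub> G) \<cdot> t) = z0" if "t \<in> insert s S" for t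
  proof -
    have tc: "t \<in> CA" using that insert.prems by auto
    have "pw (K + m) \<cdot> ((P \<otimes>\<^bsub>L\<^esub> G) \<cdot> t) = ((pw m \<otimes>\<^bsub>L\<^esub> P) \<otimes>\<^bsub>L\<^esub> (pw K \<otimes>\<^bsub>L\<^esub> G)) \<cdot> t"
      using Pc Gc tc by (simp add: sm_assoc[symmetric] int_pow_mult[symmetric] R.m_ac)
    also have "\<dots> = (pw m \<otimes>\<^bsub>L\<^esub> P) \<cdot> (pw K \<cdot> (G \<cdot> t))" using Pc Gc tc by (simp add: sm_assoc)
    also have "\<dots> = (pw K \<otimes>\<^bsub>L\<^esub> G) \<cdot> (pw m \<cdot> (P \<cdot> t))" using Pc Gc tc
      by (simp add: sm_assoc[symmetric] R.m_ac)
    finally have e: "pw (K + m) \<cdot> ((P \<otimes>\<^bsub>L\<^esub> G) \<cdot> t) = (pw m \<otimes>\<^bsub>L\<^esub> P) \<cdot> (pw K \<cdot> (G \<cdot> t))"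
      and e2: "pw (K + m) \<cdot> ((P \<otimes>\<^bsub>L\<^esub> G) \<cdot> t) = (pw K \<otimes>\<^bsub>L\<^esub> G) \<cdot> (pw m \<cdot> (P \<cdot> t))"
      using Pc Gc tc by (simp_all add: sm_assoc[symmetric] R.m_ac)
    show ?thesis
    proof (cases "t = s")
      case True then show ?thesis using e2 Ps Pc Gc by simp
    next
      case False then show ?thesis using e GK that Pc by simp
    qed
  qed
  moreover have "distinguished p (P \<otimes>\<^bsub>L\<^esub> G)" using dist_mult[OF _ dG] dP by (simp add: P_def)
  ultimately show ?case by blast
qed

end

context LM begin

lemma part2: assumes fg: "fin_gen_Lambda p A" and tor: "torsion_Lambda p A"
  shows "\<exists>G. distinguished p G \<and> (\<forall>a\<in>CA. G \<cdot> a \<in> Mtors p A)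
        \<and> (\<forall>a\<in>CA. ord_p p A (G \<cdot> a) = ess_ord p A (G \<cdot> a))"
proof -
  obtain S0 where fS0: "finite S0" and S0c: "S0 \<subseteq> CA" and CAe: "CA = gen S0"
    using fg unfolding fin_gen_Lambda_def by blast
  have torS: "\<forall>s\<in>S0. \<exists>g\<in>carrier L. g \<noteq> \<zero>\<^bsub>L\<^esub> \<and> g \<cdot> s = z0"
    using tor S0c unfolding torsion_Lambda_def by blast
  obtain G0 K where dG0: "distinguished p G0" and G0K: "\<forall>s\<in>S0. pw K \<cdot> (G0 \<cdot> s) = z0"
    using G0lem[OF fS0 S0c torS] by blast
  have G0c: "G0 \<in> carrier L" using distinguishedD[OF dG0] by blast
  define S1 where "S1 = (\<lambda>s. G0 \<cdot> s) ` S0"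
  have fS1: "finite S1" using fS0 by (simp add: S1_def)
  have S1c: "S1 \<subseteq> CA" using S0c G0c by (auto simp: S1_def)
  have S1K: "\<forall>t\<in>S1. pw K \<cdot> t = z0" using G0K by (auto simp: S1_def)
  have "\<exists>N. \<forall>z\<in>gen S1. (\<exists>j. mono j \<cdot> z = z0) \<longrightarrow> mono N \<cdot> z = z0"
    by (rule Llem[of K, rule_format, OF fS1 S1c]) (use S1K in blast)
  then obtain N where N: "\<And>z. z \<in> gen S1 \<Longrightarrow> (\<exists>j. mono j \<cdot> z = z0) \<Longrightarrow> mono N \<cdot> z = z0"
    by blast
  define X where "X = gen S1"
  have X: "ssub X" unfolding X_def using gen_ssub[OF S1c] .
  have XCA: "X \<subseteq> CA" using ssubD(1)[OF X] .
  have "S0 \<subseteq> {a \<in> CA. G0 \<cdot> a \<in> X}"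
  proof
    fix s assume "s \<in> S0"
    then show "s \<in> {a \<in> CA. G0 \<cdot> a \<in> X}" using S0c gen_incl[of S1] unfolding X_def S1_def by blast
  qed
  then have "gen S0 \<subseteq> {a \<in> CA. G0 \<cdot> a \<in> X}" using gen_least[OF ssub_pre[OF X G0c]] by blast
  then have G0a: "\<And>a. a \<in> CA \<Longrightarrow> G0 \<cdot> a \<in> X" using CAe by blast
  have z0s: "ssub {z0}" unfolding scal_submod_def by auto
  have "S1 \<subseteq> {z \<in> CA. pw K \<cdot> z \<in> {z0}}" using S1c S1K by blast
  then have "X \<subseteq> {z \<in> CA. pw K \<cdot> z \<in> {z0}}" unfolding X_def using gen_least[OF ssub_pre[OF z0s lam_int_closed]] by blast
  then have Xk: "\<And>z. z \<in> X \<Longrightarrow> pw K \<cdot> z = z0" by blast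
  define G where "G = mono N \<otimes>\<^bsub>L\<^esub> G0"
  have dG: "distinguished p G" unfolding G_def using dist_mult[OF dist_mono dG0] .
  have Gc: "G \<in> carrier L" using G0c by (simp add: G_def)
  have GM: "G \<cdot> a \<in> Mtors p A" if ac: "a \<in> CA" for a
  proof -
    have z'X: "G0 \<cdot> a \<in> X" using G0a[OF ac] .
    then have "G0 \<cdot> a \<in> Mtors p A" unfolding Mtors_def using Xk XCA by blast
    then have "mono N \<cdot> (G0 \<cdot> a) \<in> Mtors p A" using M_sm by simp
    then show ?thesis using ac G0c by (simp add: G_def sm_assoc)
  qed
  have Gord: "ord_p p A (G \<cdot> a) = ess_ord p A (G \<cdot> a)" if ac: "a \<in> CA" for a
  proof -
    define y where "y = G \<cdot> a"
    have yM: "y \<in> Mtors p A" using GM[OF ac] by (simp add: y_def)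
    have yc: "y \<in> CA" using Gc ac by (simp add: y_def)
    define z' where "z' = G0 \<cdot> a"
    have z'X: "z' \<in> X" using G0a[OF ac] by (simp add: z'_def)
    have z'c: "z' \<in> CA" using z'X XCA by blast
    have yz: "y = mono N \<cdot> z'" using ac G0c by (simp add: y_def z'_def G_def sm_assoc)
    obtain e J where eJ: "\<forall>j\<ge>J. kap (mono j \<cdot> y) = e" and lb: "\<forall>j. e \<le> kap (mono j \<cdot> y)"
      and ee: "ess_ord p A y = p ^ e" using ess_lemma[OF yM] by blast
    have ge: "e \<le> kap y" using lb[rule_format, of 0] yc by simp
    define w where "w = pw e \<cdot> z'"
    have wX: "w \<in> gen S1" using ssubD(4)[OF X lam_int_closed z'X] by (simp add: w_def X_def)
    have JM: "mono J \<cdot> y \<in> Mtors p A" using M_sm[OF yM mono_closed] .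
    have "mono (J + N) \<cdot> w = pw e \<cdot> (mono J \<cdot> y)"
      using z'c yz mono_add[OF z'c, of J N] sm_comm[of "mono (J + N)" "pw e" z'] by (simp add: w_def)
    also have "\<dots> = z0" using kapI(1)[OF JM] eJ by simp
    finally have "mono N \<cdot> w = z0" using N[OF wX] by blast
    then have "pw e \<cdot> y = z0" using yz z'c sm_comm[of "mono N" "pw e" z'] by (simp add: w_def)
    then have "kap y \<le> e" using kapI(2)[OF yM] by blast
    then show ?thesis using ge ee by (simp add: ord_kap y_def)
  qed
  show ?thesis using dG GM Gord by blast
qed

end

theorem mainTheorem3:
  fixes p :: nat and A :: "(lam, 'a, 'm) module_scheme"
  assumes "prime p" and "odd p"
    and "module (Lambda p) A"
    and "fin_gen_Lambda p A" and "torsion_Lambda p A"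
  shows
    "(\<forall>x l g. x \<in> Mtors p A \<and> p \<le> p ^ l \<and> ess_ord p A x = p ^ l
        \<and> g \<in> carrier (Lambda p) \<and> g \<odot>\<^bsub>A\<^esub> x = \<zero>\<^bsub>A\<^esub>
        \<longrightarrow> (\<exists>h\<in>carrier (Lambda p). g = lam_int p (int p ^ l) \<otimes>\<^bsub>Lambda p\<^esub> h))
     \<and> (\<exists>G. distinguished p G
        \<and> (\<forall>a\<in>carrier A. G \<odot>\<^bsub>A\<^esub> a \<in> Mtors p A)
        \<and> (\<forall>a\<in>carrier A. ord_p p A (G \<odot>\<^bsub>A\<^esub> a) = ess_ord p A (G \<odot>\<^bsub>A\<^esub> a)))
     \<and> (\<forall>x c z. x \<in> carrier A - Dpart p A \<and> c \<in> Lpart p A \<and> z \<in> Mtors p A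
        \<and> lam_int p (int p ^ delta p A x) \<odot>\<^bsub>A\<^esub> x = c \<oplus>\<^bsub>A\<^esub> z
        \<longrightarrow> c \<notin> {lam_int p (int p) \<odot>\<^bsub>A\<^esub> y | y. y \<in> Lpart p A})"
proof -
  interpret LM p A using assms(1,3) by (rule LM.intro)
  show ?thesis
  proof (intro conjI allI impI)
    fix x l g assume h: "x \<in> Mtors p A \<and> p \<le> p ^ l \<and> ess_ord p A x = p ^ l
        \<and> g \<in> carrier (Lambda p) \<and> g \<odot>\<^bsub>A\<^esub> x = \<zero>\<^bsub>A\<^esub>"
    show "\<exists>h\<in>carrier (Lambda p). g = lam_int p (int p ^ l) \<otimes>\<^bsub>Lambda p\<^esub> h"
      using part1[of x l g] h by blast
  next
    show "\<exists>G. distinguished p G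
        \<and> (\<forall>a\<in>carrier A. G \<odot>\<^bsub>A\<^esub> a \<in> Mtors p A)
        \<and> (\<forall>a\<in>carrier A. ord_p p A (G \<odot>\<^bsub>A\<^esub> a) = ess_ord p A (G \<odot>\<^bsub>A\<^esub> a))"
      by (rule part2[OF assms(4,5)])
  next
    fix x c z assume h: "x \<in> carrier A - Dpart p A \<and> c \<in> Lpart p A \<and> z \<in> Mtors p A
        \<and> lam_int p (int p ^ delta p A x) \<odot>\<^bsub>A\<^esub> x = c \<oplus>\<^bsub>A\<^esub> z"
    show "c \<notin> {lam_int p (int p) \<odot>\<^bsub>A\<^esub> y | y. y \<in> Lpart p A}"
      using part3[of x c z] h by blast
  qed
qed


end
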